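(* Fix one of the two variants $\sharp\in\{\text{lumped},\text{exact}\}$ described in the context. Let $\vec X^m\in\underline V^h_{\partial_0}$ satisfy assumption $(\mathfrak A)$ and assumption $(\mathfrak C)_\sharp$, and let $\Delta t_m>0$. Then there exists a unique pair $(\delta\vec X^{m+1},\kappa^{m+1})\in\underline V^h_\partial\times W_\sharp$ such that, with $\vec X^{m+1}=\vec X^m+\delta\vec X^{m+1}$, $$\Big(\vec X^m\cdot\vec e_1\,\tfrac{\vec X^{m+1}-\vec X^m}{\Delta t_m},\chi\,\vec\nu^m|\vec X^m_\rho|\Big)_\sharp=\Big(\vec X^m\cdot\vec e_1\,\kappa^{m+1},\chi\,|\vec X^m_\rho|\Big)_\sharp\quad\forall\,\chi\in W_\sharp,$$ $$\Big(\vec X^m\cdot\vec e_1\,\kappa^{m+1}\vec\nu^m,\vec\eta\,|\vec X^m_\rho|\Big)_\sharp+\big(\vec\eta\cdot\vec e_1,|\vec X^m_\rho|\big)+\Big((\vec X^m\cdot\vec e_1)\vec X^{m+1}_\rho,\vec\eta_\rho|\vec X^m_\rho|^{-1}\Big)=-\sum_{i=1}^2\sum_{p\in\partial_iI}\widehat\varrho^{(p)}(\vec X^m(p)\cdot\vec e_1)\,\vec\eta(p)\cdot\vec e_{3-i}\quad\forall\,\vec\eta\in\underline V^h_\partial .$$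
   Context: Setup. $\vec e_1=(1,0)^T$, $\vec e_2=(0,1)^T$; "$\cdot$" is the Euclidean inner product. $I$ is either the periodic interval $\mathbb R/\mathbb Z$ (with $\partial I=\emptyset$) or $I=(0,1)$ (with $\partial I=\{0,1\}$). $\partial I=\partial_DI\cup\partial_0I\cup\partial_1I\cup\partial_2I$ is a given disjoint partition, and $\widehat\varrho^{(p)}\in\mathbb R$, $p\in\{0,1\}$, are given constants with $|\widehat\varrho^{(p)}|\le1$. Let $J\ge3$, $h=1/J$, $q_j=jh$ ($j=0,\dots,J$; $q_0=q_J$ identified in the periodic case). $V^h$ is the space of continuous functions on $\overline I$ (periodic if $I=\mathbb R/\mathbb Z$) that are affine on each $[q_{j-1},q_j]$; $\underline V^h=[V^h]^2$; $\underline V^h_{\partial_0}=\{\vec\eta\in\underline V^h:\vec\eta(\rho)\cdot\vec e_1=0\ \forall\rho\in\partial_0I\}$; $\underline V^h_\partial=\{\vec\eta\in\underline V^h_{\partial_0}:\vec\eta(\rho)\cdot\vec e_i=0\ \forall\rho\in\partial_iI,\ i=1,2;\ \vec\eta(\rho)=\vec0\ \forall\rho\in\partial_DI\}$; $W^h_{\partial_0}=\{\chi\in V^h:\chi(\rho)=0\ \forall\rho\in\partial_0I\}$. $(\cdot,\cdot)$ is the $L^2(I)$ inner product (with dot product for vector functions), and for piecewise continuous $f,g$ the mass-lumped product is $(f,g)^h=\tfrac h2\sum_{j=1}^J[(fg)(q_j^-)+(fg)(q_{j-1}^+)]$. Two variants: in the "lumped" variant $(\cdot,\cdot)_\sharp=(\cdot,\cdot)^h$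 and $W_\sharp=W^h_{\partial_0}$; in the "exact" variant $(\cdot,\cdot)_\sharp=(\cdot,\cdot)$ and $W_\sharp=V^h$. For $\vec X^m\in\underline V^h_{\partial_0}$ with $|\vec X^m_\rho|>0$ a.e., set $\vec\nu^m=-[\vec X^m_\rho]^\perp/|\vec X^m_\rho|$, where $(a,b)^\perp=(b,-a)$. Assumption $(\mathfrak A)$: $|\vec X^m_\rho|>0$ a.e. on $I$ and $\vec X^m(\rho)\cdot\vec e_1>0$ for all $\rho\in\overline I\setminus\partial_0I$. Assumption $(\mathfrak C)_\sharp$: the set $\{((\vec X^m\cdot\vec e_1)\vec\nu^m,\chi|\vec X^m_\rho|)_\sharp:\chi\in W_\sharp\}\subset\mathbb R^2$ spans $\mathbb R^2$. *)

theory Defs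
  imports "HOL-Analysis.Analysis"
begin

definition e1 :: "real^2" where "e1 = axis 1 1"
definition e2 :: "real^2" where "e2 = axis 2 1"
definition perp :: "real^2 \<Rightarrow> real^2" where "perp v = vector [v$2, - (v$1)]"

definition node :: "nat \<Rightarrow> nat \<Rightarrow> real" where "node J j = real j / real J"

text \<open>Boundary of I: empty in the periodic case, {0,1} for I = (0,1).
  The periodic interval R/Z is represented by [0,1] with identified end points.\<close>
definition bdry :: "bool \<Rightarrow> real set" where
  "bdry periodic = (if periodic then {} else {0, 1})"

text \<open>V^h: continuous piecewise affine functions on [0,1] (periodic if required);
  functions are normalised to vanish outside [0,1] so that they are determined
  by their values on the closure of I.\<close>
definition Vh :: "bool \<Rightarrow> nat \<Rightarrow> (real \<Rightarrow> real) set" where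
  "Vh periodic J = {f. continuous_on {0..1} f
      \<and> (\<forall>j\<in>{1..J}. \<exists>a b. \<forall>x\<in>{node J (j - 1)..node J j}. f x = a * x + b)
      \<and> (periodic \<longrightarrow> f 0 = f 1)
      \<and> (\<forall>x. x \<notin> {0..1} \<longrightarrow> f x = 0)}"

definition VVh :: "bool \<Rightarrow> nat \<Rightarrow> (real \<Rightarrow> real^2) set" where
  "VVh periodic J = {X. \<forall>i. (\<lambda>x. X x $ i) \<in> Vh periodic J}"

definition VVh0 :: "bool \<Rightarrow> nat \<Rightarrow> real set \<Rightarrow> (real \<Rightarrow> real^2) set" where
  "VVh0 periodic J d0 = {X \<in> VVh periodic J. \<forall>r\<in>d0. X r \<bullet> e1 = 0}"

definition VVhD :: "bool \<Rightarrow> nat \<Rightarrow> real set \<Rightarrow> real set \<Rightarrow> real set \<Rightarrow> real set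
    \<Rightarrow> (real \<Rightarrow> real^2) set" where
  "VVhD periodic J dD d0 d1 d2 = {X \<in> VVh0 periodic J d0.
      (\<forall>r\<in>d1. X r \<bullet> e1 = 0) \<and> (\<forall>r\<in>d2. X r \<bullet> e2 = 0) \<and> (\<forall>r\<in>dD. X r = 0)}"

definition Wh0 :: "bool \<Rightarrow> nat \<Rightarrow> real set \<Rightarrow> (real \<Rightarrow> real) set" where
  "Wh0 periodic J d0 = {c \<in> Vh periodic J. \<forall>r\<in>d0. c r = 0}"

text \<open>Derivative w.r.t. rho (defined a.e.; piecewise constant for elements of V^h).\<close>
definition Xrho :: "(real \<Rightarrow> 'a::real_normed_vector) \<Rightarrow> real \<Rightarrow> 'a" where
  "Xrho X x = vector_derivative X (at x)"

definition nu :: "(real \<Rightarrow> real^2) \<Rightarrow> real \<Rightarrow> real^2" where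
  "nu X x = (1 / norm (Xrho X x)) *\<^sub>R (- perp (Xrho X x))"

definition ip :: "(real \<Rightarrow> 'a::real_inner) \<Rightarrow> (real \<Rightarrow> 'a) \<Rightarrow> real" where
  "ip f g = integral {0..1} (\<lambda>x. f x \<bullet> g x)"

definition ip_lump :: "nat \<Rightarrow> (real \<Rightarrow> 'a::real_inner) \<Rightarrow> (real \<Rightarrow> 'a) \<Rightarrow> real" where
  "ip_lump J f g = (1 / real J) / 2 * (\<Sum>j\<in>{1..J}.
      Lim (at_left (node J j)) (\<lambda>x. f x \<bullet> g x)
    + Lim (at_right (node J (j - 1))) (\<lambda>x. f x \<bullet> g x))"

definition ip_sharp :: "bool \<Rightarrow> nat \<Rightarrow> (real \<Rightarrow> 'a::real_inner) \<Rightarrow> (real \<Rightarrow> 'a) \<Rightarrow> real" where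
  "ip_sharp lumped J f g = (if lumped then ip_lump J f g else ip f g)"

definition W_sharp :: "bool \<Rightarrow> bool \<Rightarrow> nat \<Rightarrow> real set \<Rightarrow> (real \<Rightarrow> real) set" where
  "W_sharp lumped periodic J d0 = (if lumped then Wh0 periodic J d0 else Vh periodic J)"

definition assmA :: "real set \<Rightarrow> (real \<Rightarrow> real^2) \<Rightarrow> bool" where
  "assmA d0 X \<longleftrightarrow> (AE x in lborel. x \<in> {0..1} \<longrightarrow> norm (Xrho X x) > 0)
      \<and> (\<forall>r\<in>{0..1} - d0. X r \<bullet> e1 > 0)"

definition assmC :: "bool \<Rightarrow> bool \<Rightarrow> nat \<Rightarrow> real set \<Rightarrow> (real \<Rightarrow> real^2) \<Rightarrow> bool" where
  "assmC lumped periodic J d0 X \<longleftrightarrow>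
     span {(\<chi> i. ip_sharp lumped J (\<lambda>x. (X x \<bullet> e1) * (nu X x $ i))
                                    (\<lambda>x. c x * norm (Xrho X x)))
           | c. c \<in> W_sharp lumped periodic J d0} = UNIV"

end

theory Submission
  imports Defs "HOL-Library.Function_Algebras"
begin


instantiation "fun" :: (type, real_vector) real_vector
begin
definition scaleR_fun :: "real \<Rightarrow> ('a \<Rightarrow> 'b) \<Rightarrow> 'a \<Rightarrow> 'b" where
  "scaleR_fun r f = (\<lambda>x. r *\<^sub>R f x)"
instance by standard (auto simp: scaleR_fun_def fun_eq_iff scaleR_add_right scaleR_add_left)
end

lemma scaleR_fun_apply[simp]: "(r *\<^sub>R f) x = r *\<^sub>R f x" by (simp add: scaleR_fun_def)



lemma lin_sum:
  fixes phi :: "'v::real_vector \<Rightarrow> 'w::real_vector"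
  assumes sub: "subspace U"
    and add: "\<And>x y. x\<in>U \<Longrightarrow> y\<in>U \<Longrightarrow> phi (x+y) = phi x + phi y"
    and sc: "\<And>c x. x\<in>U \<Longrightarrow> phi (c *\<^sub>R x) = c *\<^sub>R phi x"
    and fin: "finite S" and SU: "S \<subseteq> U"
  shows "phi (\<Sum>b\<in>S. r b *\<^sub>R b) = (\<Sum>b\<in>S. r b *\<^sub>R phi b)"
  using fin SU
proof (induction S rule: finite_induct)
  case empty
  have "phi (0 *\<^sub>R 0) = 0 *\<^sub>R phi 0" using sc[of 0 0] subspace_0[OF sub] by blast
  then show ?case by simp
next
  case (insert x F)
  have xU: "x \<in> U" and FU: "F \<subseteq> U" using insert by auto
  have sU: "(\<Sum>b\<in>F. r b *\<^sub>R b) \<in> U"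
    by (rule subspace_sum[OF sub]) (use FU subspace_scale[OF sub] in blast)
  have "phi (\<Sum>b\<in>insert x F. r b *\<^sub>R b) = phi (r x *\<^sub>R x + (\<Sum>b\<in>F. r b *\<^sub>R b))"
    using insert by simp
  also have "\<dots> = r x *\<^sub>R phi x + phi (\<Sum>b\<in>F. r b *\<^sub>R b)"
    using add[OF subspace_scale[OF sub xU] sU] sc[OF xU] by simp
  also have "\<dots> = (\<Sum>b\<in>insert x F. r b *\<^sub>R phi b)"
    using insert FU by simp
  finally show ?case .
qed

lemma abstract_solve:
  fixes U :: "'v::real_vector set" and a :: "'v \<Rightarrow> 'v \<Rightarrow> real" and F :: "'v \<Rightarrow> real"
  assumes sub: "subspace U"
    and bnd: "\<And>A. A \<subseteq> U \<Longrightarrow> independent A \<Longrightarrow> finite A \<Longrightarrow> card A \<le> n"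
    and a_add1: "\<And>u u' v. u\<in>U \<Longrightarrow> u'\<in>U \<Longrightarrow> v\<in>U \<Longrightarrow> a (u+u') v = a u v + a u' v"
    and a_sc1: "\<And>c u v. u\<in>U \<Longrightarrow> v\<in>U \<Longrightarrow> a (c *\<^sub>R u) v = c * a u v"
    and a_add2: "\<And>u v v'. u\<in>U \<Longrightarrow> v\<in>U \<Longrightarrow> v'\<in>U \<Longrightarrow> a u (v+v') = a u v + a u v'"
    and a_sc2: "\<And>c u v. u\<in>U \<Longrightarrow> v\<in>U \<Longrightarrow> a u (c *\<^sub>R v) = c * a u v"
    and F_add: "\<And>v v'. v\<in>U \<Longrightarrow> v'\<in>U \<Longrightarrow> F (v+v') = F v + F v'"
    and F_sc: "\<And>c v. v\<in>U \<Longrightarrow> F (c *\<^sub>R v) = c * F v"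
    and inj: "\<And>u. u\<in>U \<Longrightarrow> \<forall>v\<in>U. a u v = 0 \<Longrightarrow> u = 0"
  shows "\<exists>!u. u\<in>U \<and> (\<forall>v\<in>U. a u v = F v)"
proof -
  obtain A where AU: "A \<subseteq> U" and indA: "independent A" and UA: "U \<subseteq> span A"
    using maximal_independent_subset[of U] by blast
  have finA: "finite A"
  proof (rule ccontr)
    assume "infinite A"
    then obtain B where "finite B" "card B = Suc n" "B \<subseteq> A"
      using infinite_arbitrarily_large by blast
    moreover have "independent B" using indA \<open>B \<subseteq> A\<close> independent_mono by blast
    ultimately show False using bnd[of B] AU by auto
  qed
  have spanA: "span A = U" using UA span_minimal[OF AU sub] by blast
  have inU: "(\<Sum>b\<in>A. r b *\<^sub>R b) \<in> U" for r
    by (rule subspace_sum[OF sub]) (use AU subspace_scale[OF sub] in blast)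
  have rep: "\<exists>r. v = (\<Sum>b\<in>A. r b *\<^sub>R b)" if "v \<in> U" for v
    using that UA span_finite[OF finA] by auto
  have coef0: "\<forall>b\<in>A. r b = 0" if "(\<Sum>b\<in>A. r b *\<^sub>R b) = 0" for r
    using indA that dependent_finite[OF finA] by auto
  have ext: "a u v = (\<Sum>b\<in>A. r b * a u b)" if "u \<in> U" "v = (\<Sum>b\<in>A. r b *\<^sub>R b)" for u v r
    using lin_sum[OF sub, of "a u" A r] that a_add2 a_sc2 finA AU by auto
  have Fext: "F v = (\<Sum>b\<in>A. r b * F b)" if "v = (\<Sum>b\<in>A. r b *\<^sub>R b)" for v r
    using lin_sum[OF sub, of F A r] that F_add F_sc finA AU by auto
  define T where "T u = (\<Sum>b\<in>A. a u b *\<^sub>R b)" for u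
  have TU: "T u \<in> U" for u unfolding T_def by (rule inU)
  have T_add: "T (u + u') = T u + T u'" if "u \<in> U" "u' \<in> U" for u u'
    unfolding T_def sum.distrib[symmetric]
    by (rule sum.cong) (use that AU a_add1 in \<open>auto simp: scaleR_add_left\<close>)
  have T_sc: "T (c *\<^sub>R u) = c *\<^sub>R T u" if "u \<in> U" for c u
    unfolding T_def scaleR_sum_right
    by (rule sum.cong) (use that AU a_sc1 in auto)
  have T0: "u = 0" if "u \<in> U" "T u = 0" for u
  proof -
    have "\<forall>b\<in>A. a u b = 0" using coef0[of "a u"] that unfolding T_def by auto
    then have "\<forall>v\<in>U. a u v = 0" using rep ext[OF \<open>u\<in>U\<close>] by fastforce
    then show ?thesis using inj that by blast
  qed
  have Tinj: "inj_on T U"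
  proof (rule inj_onI)
    fix u u' assume u: "u \<in> U" "u' \<in> U" "T u = T u'"
    have m: "(-1) *\<^sub>R u' \<in> U" using subspace_scale[OF sub u(2)] .
    have e: "T (u + (-1) *\<^sub>R u') = T u + (-1) *\<^sub>R T u'"
      using T_add[OF u(1) m] T_sc[OF u(2), of "-1"] by (simp only:)
    have "T (u + (-1) *\<^sub>R u') = 0" unfolding e using u(3) by simp
    then have "u + (-1) *\<^sub>R u' = 0" using T0 subspace_add[OF sub u(1) m] by blast
    then show "u = u'" by (simp add: algebra_simps)
  qed
  have Tlin: "T (\<Sum>b\<in>A. r b *\<^sub>R b) = (\<Sum>b\<in>A. r b *\<^sub>R T b)" for r
    using lin_sum[OF sub, of T A r] T_add T_sc finA AU by auto
  have injA: "inj_on T A" using inj_on_subset[OF Tinj AU] .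
  have indTA: "independent (T ` A)"
  proof
    assume "dependent (T ` A)"
    then obtain c where c: "\<exists>y\<in>T ` A. c y \<noteq> 0" "(\<Sum>y\<in>T ` A. c y *\<^sub>R y) = 0"
      using dependent_finite[of "T ` A"] finA by auto
    have "(\<Sum>y\<in>T ` A. c y *\<^sub>R y) = (\<Sum>b\<in>A. c (T b) *\<^sub>R T b)"
      using sum.reindex[OF injA] by simp
    also have "\<dots> = T (\<Sum>b\<in>A. c (T b) *\<^sub>R b)" using Tlin by simp
    finally have "(\<Sum>b\<in>A. c (T b) *\<^sub>R b) = 0" using T0 inU c(2) by metis
    then have "\<forall>b\<in>A. c (T b) = 0" using coef0[of "\<lambda>b. c (T b)"] by blast
    then show False using c(1) by auto
  qed
  have cardTA: "card (T ` A) = card A" using card_image[OF injA] .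
  have UTA: "U \<subseteq> span (T ` A)"
  proof
    fix w assume w: "w \<in> U"
    show "w \<in> span (T ` A)"
    proof (rule ccontr)
      assume nw: "w \<notin> span (T ` A)"
      have "independent (insert w (T ` A))" using independent_insertI[OF nw indTA] .
      moreover have "insert w (T ` A) \<subseteq> span A" using w UA TU spanA by auto
      ultimately have "card (insert w (T ` A)) \<le> card A"
        using independent_span_bound[OF finA] by blast
      moreover have "w \<notin> T ` A" using nw span_base by blast
      ultimately show False using cardTA finA by simp
    qed
  qed
  define w where "w = (\<Sum>b\<in>A. F b *\<^sub>R b)"
  have "w \<in> span (T ` A)" using UTA inU w_def by blast
  then obtain c where c: "w = (\<Sum>y\<in>T ` A. c y *\<^sub>R y)" using span_finite[of "T ` A"] finA by auto
  define u0 where "u0 = (\<Sum>b\<in>A. c (T b) *\<^sub>R b)"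
  have u0U: "u0 \<in> U" unfolding u0_def by (rule inU)
  have "T u0 = w" unfolding u0_def Tlin c by (simp add: sum.reindex[OF injA])
  then have "(\<Sum>b\<in>A. (a u0 b - F b) *\<^sub>R b) = 0"
    unfolding T_def w_def by (simp add: scaleR_diff_left sum_subtractf)
  then have eqA: "\<forall>b\<in>A. a u0 b = F b" using coef0[of "\<lambda>b. a u0 b - F b"] by auto
  have sol: "\<forall>v\<in>U. a u0 v = F v"
  proof
    fix v assume "v \<in> U"
    then obtain r where r: "v = (\<Sum>b\<in>A. r b *\<^sub>R b)" using rep by blast
    show "a u0 v = F v" using ext[OF u0U r] Fext[OF r] eqA by simp
  qed
  show ?thesis
  proof (rule ex_ex1I)
    show "\<exists>u. u \<in> U \<and> (\<forall>v\<in>U. a u v = F v)" using u0U sol by blast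
  next
    fix u1 u2 assume s: "u1 \<in> U \<and> (\<forall>v\<in>U. a u1 v = F v)" "u2 \<in> U \<and> (\<forall>v\<in>U. a u2 v = F v)"
    have m: "(-1) *\<^sub>R u2 \<in> U" using subspace_scale[OF sub] s by blast
    have "\<forall>v\<in>U. a (u1 + (-1) *\<^sub>R u2) v = 0"
    proof
      fix v assume v: "v \<in> U"
      have e1: "a (u1 + (-1) *\<^sub>R u2) v = a u1 v + a ((-1) *\<^sub>R u2) v"
        using a_add1[OF _ m v] s by blast
      have e2: "a ((-1) *\<^sub>R u2) v = (-1) * a u2 v" using a_sc1 s v by blast
      show "a (u1 + (-1) *\<^sub>R u2) v = 0" unfolding e1 e2 using s v by simp
    qed
    then have "u1 + (-1) *\<^sub>R u2 = 0" using inj subspace_add[OF sub _ m] s by blast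
    then show "u1 = u2" by (simp add: algebra_simps)
  qed
qed



definition opn :: "nat \<Rightarrow> nat \<Rightarrow> real set" where "opn J j = {node J (j-1)<..<node J j}"
definition cls :: "nat \<Rightarrow> nat \<Rightarrow> real set" where "cls J j = {node J (j-1)..node J j}"
definition PC :: "nat \<Rightarrow> (real \<Rightarrow> 'a::real_normed_vector) \<Rightarrow> bool" where
  "PC J h \<longleftrightarrow> (\<forall>j\<in>{1..J}. \<exists>g. continuous_on (cls J j) g \<and> (\<forall>x\<in>opn J j. h x = g x))"
definition PCst :: "nat \<Rightarrow> (real \<Rightarrow> 'a) \<Rightarrow> bool" where
  "PCst J h \<longleftrightarrow> (\<forall>j\<in>{1..J}. \<exists>c. \<forall>x\<in>opn J j. h x = c)"
definition eqv :: "nat \<Rightarrow> (real \<Rightarrow> 'a) \<Rightarrow> (real \<Rightarrow> 'a) \<Rightarrow> bool" where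
  "eqv J h h' \<longleftrightarrow> (\<forall>j\<in>{1..J}. \<forall>x\<in>opn J j. h x = h' x)"
definition Lump :: "nat \<Rightarrow> (real \<Rightarrow> real) \<Rightarrow> real" where
  "Lump J h = (1 / real J) / 2 * (\<Sum>j\<in>{1..J}.
      Lim (at_left (node J j)) h + Lim (at_right (node J (j - 1))) h)"
definition IS :: "bool \<Rightarrow> nat \<Rightarrow> (real \<Rightarrow> real) \<Rightarrow> real" where
  "IS l J h = (if l then Lump J h else integral {0..1} h)"

lemma ip_sharp_IS: "ip_sharp l J f g = IS l J (\<lambda>x. f x \<bullet> g x)"
  by (simp add: ip_sharp_def IS_def ip_lump_def Lump_def ip_def)

lemma ip_int: "ip f g = integral {0..1} (\<lambda>x. f x \<bullet> g x)"
  by (simp add: ip_def)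

lemma node_lt: "J \<ge> 1 \<Longrightarrow> j \<in> {1..J} \<Longrightarrow> node J (j-1) < node J j"
  by (auto simp: node_def divide_strict_right_mono)

lemma node_ge0: "0 \<le> node J k" by (simp add: node_def)
lemma node_le1: "k \<le> J \<Longrightarrow> node J k \<le> 1"
  by (cases "J = 0") (auto simp: node_def)
lemma node_0[simp]: "node J 0 = 0" by (simp add: node_def)
lemma node_J[simp]: "J \<ge> 1 \<Longrightarrow> node J J = 1" by (simp add: node_def)

lemma cls_sub: "J \<ge> 1 \<Longrightarrow> j \<in> {1..J} \<Longrightarrow> cls J j \<subseteq> {0..1}"
  using node_ge0[of J "j-1"] node_le1[of j J] by (auto simp: cls_def)
lemma opn_sub_cls: "opn J j \<subseteq> cls J j" by (auto simp: opn_def cls_def)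
lemma opn_sub: "J \<ge> 1 \<Longrightarrow> j \<in> {1..J} \<Longrightarrow> opn J j \<subseteq> {0<..<1}"
  using node_ge0[of J "j-1"] node_le1[of j J] by (auto simp: opn_def)
lemma opn_ne: "J \<ge> 1 \<Longrightarrow> j \<in> {1..J} \<Longrightarrow> (node J (j-1) + node J j) / 2 \<in> opn J j"
  using node_lt[of J j] by (auto simp: opn_def)

lemma cover_opn:
  assumes J: "J \<ge> 1" and x: "x \<in> {0..1}" "x \<notin> node J ` {0..J}"
  shows "\<exists>j\<in>{1..J}. x \<in> opn J j"
proof -
  define k where "k = nat \<lfloor>x * J\<rfloor>"
  have Jp: "real J > 0" using J by simp
  have x0: "0 \<le> x" and x1: "x \<le> 1" using x by auto
  have fl0: "0 \<le> \<lfloor>x * J\<rfloor>" using x0 by simp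
  have kk: "real k = of_int \<lfloor>x * J\<rfloor>" using fl0 unfolding k_def by simp
  have le: "real k \<le> x * J" using kk of_int_floor_le[of "x * J"] by linarith
  have lt2: "x * J < real k + 1" using kk real_of_int_floor_add_one_gt[of "x * J"] by linarith
  have xJ: "x * J \<le> real J" using mult_right_mono[OF x1, of "real J"] by simp
  have ne: "real k \<noteq> x * J"
  proof
    assume e: "real k = x * J"
    then have "real k \<le> real J" using xJ by simp
    then have "k \<le> J" by simp
    moreover have "x = node J k" unfolding node_def using e Jp by (simp add: eq_divide_eq)
    ultimately show False using x(2) by auto
  qed
  have lt: "real k < x * J" using le ne by simp
  have "k < J"
  proof (rule ccontr)
    assume "\<not> k < J" then have "real J \<le> real k" by simp
    then show False using lt xJ by simp
  qed
  have a: "node J k < x" unfolding node_def using lt Jp by (simp add: divide_less_eq)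
  have b: "x < node J (k+1)" unfolding node_def using lt2 Jp by (simp add: less_divide_eq)
  have "x \<in> opn J (k+1)" using a b by (simp add: opn_def)
  then show ?thesis using \<open>k < J\<close> by force
qed

lemma cover_cls:
  assumes J: "J \<ge> 1" and x: "x \<in> {0..1}"
  shows "\<exists>j\<in>{1..J}. x \<in> cls J j"
proof (cases "x \<in> node J ` {0..J}")
  case True
  then obtain k where k: "k \<le> J" "x = node J k" by auto
  show ?thesis
  proof (cases "k = 0")
    case True then show ?thesis using k J node_lt[of J 1] by (auto simp: cls_def intro!: bexI[of _ 1])
  next
    case False then show ?thesis using k by (auto simp: cls_def node_def divide_right_mono intro!: bexI[of _ k])
  qed
next
  case False
  then show ?thesis using cover_opn[OF J x False] opn_sub_cls by blast
qed

lemma PCst_PC: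
  assumes "PCst J h" shows "PC J h"
  unfolding PC_def
proof
  fix j assume "j \<in> {1..J}"
  then obtain c where "\<forall>x\<in>opn J j. h x = c" using assms unfolding PCst_def by blast
  then show "\<exists>g. continuous_on (cls J j) g \<and> (\<forall>x\<in>opn J j. h x = g x)"
    by (intro exI[of _ "\<lambda>x. c"]) simp
qed

lemma PCst_comp:
  assumes "PCst J h" shows "PCst J (\<lambda>x. f (h x))"
  unfolding PCst_def
proof
  fix j assume "j \<in> {1..J}"
  then obtain c where "\<forall>x\<in>opn J j. h x = c" using assms unfolding PCst_def by blast
  then show "\<exists>c. \<forall>x\<in>opn J j. f (h x) = c" by (intro exI[of _ "f c"]) simp
qed

lemma PC_cont:
  assumes J: "J \<ge> 1" and c: "continuous_on {0..1} h" shows "PC J h"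
  unfolding PC_def
proof
  fix j assume "j \<in> {1..J}"
  then have "continuous_on (cls J j) h" using continuous_on_subset[OF c cls_sub[OF J]] by blast
  then show "\<exists>g. continuous_on (cls J j) g \<and> (\<forall>x\<in>opn J j. h x = g x)"
    by (intro exI[of _ h]) simp
qed

lemma PC_const: "PC J (\<lambda>x. c)"
  unfolding PC_def by (intro ballI exI[of _ "\<lambda>x. c"]) simp

lemma PC2:
  assumes f: "PC J f" and g: "PC J g"
    and op: "\<And>j a b. continuous_on (cls J j) a \<Longrightarrow> continuous_on (cls J j) b
              \<Longrightarrow> continuous_on (cls J j) (\<lambda>x. op (a x) (b x))"
  shows "PC J (\<lambda>x. op (f x) (g x))"
  unfolding PC_def
proof
  fix j assume j: "j \<in> {1..J}"
  obtain a where a: "continuous_on (cls J j) a" "\<forall>x\<in>opn J j. f x = a x"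
    using f j unfolding PC_def by blast
  obtain b where b: "continuous_on (cls J j) b" "\<forall>x\<in>opn J j. g x = b x"
    using g j unfolding PC_def by blast
  show "\<exists>c. continuous_on (cls J j) c \<and> (\<forall>x\<in>opn J j. op (f x) (g x) = c x)"
    using op[OF a(1) b(1)] a(2) b(2) by (intro exI[of _ "\<lambda>x. op (a x) (b x)"]) simp
qed

lemma PC_add: "PC J f \<Longrightarrow> PC J g \<Longrightarrow> PC J (\<lambda>x. f x + g x)"
  by (rule PC2[where op="(+)"]) (auto intro: continuous_on_add)

lemma PC_diff: "PC J f \<Longrightarrow> PC J g \<Longrightarrow> PC J (\<lambda>x. f x - g x)"
  by (rule PC2[where op="(-)"]) (auto intro: continuous_on_diff)

lemma PC_mult: "PC J (f::real\<Rightarrow>real) \<Longrightarrow> PC J g \<Longrightarrow> PC J (\<lambda>x. f x * g x)"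
  by (rule PC2[where op="(*)"]) (auto intro: continuous_on_mult)

lemma PC_scaleR: "PC J (f::real\<Rightarrow>real) \<Longrightarrow> PC J (g::real\<Rightarrow>'a::real_normed_vector) \<Longrightarrow> PC J (\<lambda>x. f x *\<^sub>R g x)"
  by (rule PC2[where op="(*\<^sub>R)"]) (auto intro: continuous_on_scaleR)

lemma PC_inner: "PC J (f::real\<Rightarrow>'a::real_inner) \<Longrightarrow> PC J g \<Longrightarrow> PC J (\<lambda>x. f x \<bullet> g x)"
  by (rule PC2[where op="(\<bullet>)"]) (auto intro: continuous_on_inner)

lemma PC_eqv:
  assumes "PC J h" "eqv J h h'" shows "PC J h'"
  unfolding PC_def
proof
  fix j assume j: "j \<in> {1..J}"
  then obtain g where "continuous_on (cls J j) g" "\<forall>x\<in>opn J j. h x = g x"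
    using assms(1) unfolding PC_def by blast
  then show "\<exists>g. continuous_on (cls J j) g \<and> (\<forall>x\<in>opn J j. h' x = g x)"
    using assms(2) j unfolding eqv_def by (intro exI[of _ g]) simp
qed

lemma lim_left:
  assumes J: "J \<ge> 1" and j: "j \<in> {1..J}" and g: "continuous_on (cls J j) g"
    and hg: "\<forall>x\<in>opn J j. h x = g x"
  shows "(h \<longlongrightarrow> g (node J j)) (at_left (node J j))"
proof -
  have lt: "node J (j-1) < node J j" using node_lt[OF J j] .
  have "(g \<longlongrightarrow> g (node J j)) (at (node J j) within cls J j)"
    using g lt unfolding continuous_on_def cls_def by auto
  then have "(g \<longlongrightarrow> g (node J j)) (at_left (node J j))"
    using at_within_Icc_at_left[OF lt] by (simp add: cls_def)
  moreover have "eventually (\<lambda>x. h x = g x) (at_left (node J j))"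
    using eventually_at_left_real[OF lt] hg by (auto simp: opn_def elim: eventually_mono)
  ultimately show ?thesis using tendsto_cong by blast
qed

lemma lim_right:
  assumes J: "J \<ge> 1" and j: "j \<in> {1..J}" and g: "continuous_on (cls J j) g"
    and hg: "\<forall>x\<in>opn J j. h x = g x"
  shows "(h \<longlongrightarrow> g (node J (j-1))) (at_right (node J (j-1)))"
proof -
  have lt: "node J (j-1) < node J j" using node_lt[OF J j] .
  have "(g \<longlongrightarrow> g (node J (j-1))) (at (node J (j-1)) within cls J j)"
    using g lt unfolding continuous_on_def cls_def by auto
  then have "(g \<longlongrightarrow> g (node J (j-1))) (at_right (node J (j-1)))"
    using at_within_Icc_at_right[OF lt] by (simp add: cls_def)
  moreover have "eventually (\<lambda>x. h x = g x) (at_right (node J (j-1)))"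
    using eventually_at_right_real[OF lt] hg by (auto simp: opn_def elim: eventually_mono)
  ultimately show ?thesis using tendsto_cong by blast
qed

lemma PC_left: "J \<ge> 1 \<Longrightarrow> j \<in> {1..J} \<Longrightarrow> PC J h \<Longrightarrow> \<exists>L. (h \<longlongrightarrow> L) (at_left (node J j))"
  unfolding PC_def using lim_left by blast
lemma PC_right: "J \<ge> 1 \<Longrightarrow> j \<in> {1..J} \<Longrightarrow> PC J h \<Longrightarrow> \<exists>L. (h \<longlongrightarrow> L) (at_right (node J (j-1)))"
  unfolding PC_def using lim_right by blast

lemma Lim_eqv_left:
  assumes J: "J \<ge> 1" and j: "j \<in> {1..J}" and e: "eqv J h h'"
  shows "Lim (at_left (node J j)) h = Lim (at_left (node J j)) h'"
proof -
  have lt: "node J (j-1) < node J j" using node_lt[OF J j] .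
  have "eventually (\<lambda>x. h x = h' x) (at_left (node J j))"
    using eventually_at_left_real[OF lt] e j by (auto simp: opn_def eqv_def elim: eventually_mono)
  then show ?thesis by (rule Lim_cong) simp
qed

lemma Lim_eqv_right:
  assumes J: "J \<ge> 1" and j: "j \<in> {1..J}" and e: "eqv J h h'"
  shows "Lim (at_right (node J (j-1))) h = Lim (at_right (node J (j-1))) h'"
proof -
  have lt: "node J (j-1) < node J j" using node_lt[OF J j] .
  have "eventually (\<lambda>x. h x = h' x) (at_right (node J (j-1)))"
    using eventually_at_right_real[OF lt] e j by (auto simp: opn_def eqv_def elim: eventually_mono)
  then show ?thesis by (rule Lim_cong) simp
qed

lemma int_eqv:
  assumes J: "J \<ge> 1" and e: "eqv J h h'"
  shows "integral {0..1} h = integral {0..1} h'"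
proof (rule integral_spike[of "node J ` {0..J}"])
  show "negligible (node J ` {0..J})" by (rule negligible_finite) simp
  fix x assume "x \<in> {0..1::real} - node J ` {0..J}"
  then obtain j where "j \<in> {1..J}" "x \<in> opn J j" using cover_opn[OF J] by blast
  then show "h' x = h x" using e by (auto simp: eqv_def)
qed

lemma IS_eqv:
  assumes J: "J \<ge> 1" and e: "eqv J h h'"
  shows "IS l J h = IS l J h'"
proof -
  have "(\<Sum>j\<in>{1..J}. Lim (at_left (node J j)) h + Lim (at_right (node J (j - 1))) h)
      = (\<Sum>j\<in>{1..J}. Lim (at_left (node J j)) h' + Lim (at_right (node J (j - 1))) h')"
  proof (rule sum.cong[OF refl])
    fix j assume j: "j \<in> {1..J}"
    show "Lim (at_left (node J j)) h + Lim (at_right (node J (j - 1))) h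
        = Lim (at_left (node J j)) h' + Lim (at_right (node J (j - 1))) h'"
      using Lim_eqv_left[OF J j e] Lim_eqv_right[OF J j e] by simp
  qed
  then show ?thesis unfolding IS_def Lump_def using int_eqv[OF J e] by simp
qed

lemma PC_integrable:
  assumes J: "J \<ge> 1" and h: "PC J (h::real\<Rightarrow>real)"
  shows "h integrable_on {0..1}"
proof -
  have "k \<le> J \<Longrightarrow> h integrable_on {0..node J k}" for k
  proof (induction k)
    case 0 then show ?case using integrable_on_refl[of h 0] by simp
  next
    case (Suc k)
    then have j: "Suc k \<in> {1..J}" by simp
    obtain g where g: "continuous_on (cls J (Suc k)) g" "\<forall>x\<in>opn J (Suc k). h x = g x"
      using h j unfolding PC_def by blast
    have lt: "node J k < node J (Suc k)" using node_lt[OF J j] by simp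
    have gi: "g integrable_on {node J k..node J (Suc k)}"
      using g(1) integrable_continuous_interval by (simp add: cls_def)
    have fin: "finite {node J k, node J (Suc k)}" by simp
    have "h integrable_on {node J k..node J (Suc k)}"
      by (rule integrable_spike_finite[OF fin _ gi]) (use g(2) in \<open>auto simp: opn_def\<close>)
    moreover have "h integrable_on {0..node J k}" using Suc by simp
    ultimately show ?case using Henstock_Kurzweil_Integration.integrable_combine[OF node_ge0 less_imp_le[OF lt]] by blast
  qed
  from this[of J] show ?thesis using J by simp
qed

lemma aux_lin: "(K::real) * (c1 * A + c2 * B) = c1 * (K * A) + c2 * (K * B)"
  by (simp add: algebra_simps)

lemma Lump_lin:
  assumes J: "J \<ge> 1" and h1: "PC J h1" and h2: "PC J h2"
  shows "Lump J (\<lambda>x. c1 * h1 x + c2 * h2 x) = c1 * Lump J h1 + c2 * Lump J h2"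
proof -
  have L: "Lim (at_left (node J j)) (\<lambda>x. c1 * h1 x + c2 * h2 x)
      = c1 * Lim (at_left (node J j)) h1 + c2 * Lim (at_left (node J j)) h2" if j: "j \<in> {1..J}" for j
  proof -
    obtain L1 L2 where t1: "(h1 \<longlongrightarrow> L1) (at_left (node J j))" and t2: "(h2 \<longlongrightarrow> L2) (at_left (node J j))"
      using PC_left[OF J j h1] PC_left[OF J j h2] by blast
    have t: "((\<lambda>x. c1 * h1 x + c2 * h2 x) \<longlongrightarrow> c1 * L1 + c2 * L2) (at_left (node J j))"
      by (intro tendsto_add tendsto_mult_left t1 t2)
    show ?thesis using tendsto_Lim[OF _ t] tendsto_Lim[OF _ t1] tendsto_Lim[OF _ t2] by simp
  qed
  have R: "Lim (at_right (node J (j-1))) (\<lambda>x. c1 * h1 x + c2 * h2 x)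
      = c1 * Lim (at_right (node J (j-1))) h1 + c2 * Lim (at_right (node J (j-1))) h2" if j: "j \<in> {1..J}" for j
  proof -
    obtain L1 L2 where t1: "(h1 \<longlongrightarrow> L1) (at_right (node J (j-1)))" and t2: "(h2 \<longlongrightarrow> L2) (at_right (node J (j-1)))"
      using PC_right[OF J j h1] PC_right[OF J j h2] by blast
    have t: "((\<lambda>x. c1 * h1 x + c2 * h2 x) \<longlongrightarrow> c1 * L1 + c2 * L2) (at_right (node J (j-1)))"
      by (intro tendsto_add tendsto_mult_left t1 t2)
    show ?thesis using tendsto_Lim[OF _ t] tendsto_Lim[OF _ t1] tendsto_Lim[OF _ t2] by simp
  qed
  have "(\<Sum>j\<in>{1..J}. Lim (at_left (node J j)) (\<lambda>x. c1 * h1 x + c2 * h2 x)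
          + Lim (at_right (node J (j - 1))) (\<lambda>x. c1 * h1 x + c2 * h2 x))
      = (\<Sum>j\<in>{1..J}. c1 * (Lim (at_left (node J j)) h1 + Lim (at_right (node J (j - 1))) h1)
          + c2 * (Lim (at_left (node J j)) h2 + Lim (at_right (node J (j - 1))) h2))"
  proof (rule sum.cong[OF refl])
    fix j assume j: "j \<in> {1..J}"
    show "Lim (at_left (node J j)) (\<lambda>x. c1 * h1 x + c2 * h2 x)
          + Lim (at_right (node J (j - 1))) (\<lambda>x. c1 * h1 x + c2 * h2 x)
      = c1 * (Lim (at_left (node J j)) h1 + Lim (at_right (node J (j - 1))) h1)
          + c2 * (Lim (at_left (node J j)) h2 + Lim (at_right (node J (j - 1))) h2)"
      using L[OF j] R[OF j] by (simp add: algebra_simps)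
  qed
  also have "\<dots> = c1 * (\<Sum>j\<in>{1..J}. Lim (at_left (node J j)) h1 + Lim (at_right (node J (j - 1))) h1)
          + c2 * (\<Sum>j\<in>{1..J}. Lim (at_left (node J j)) h2 + Lim (at_right (node J (j - 1))) h2)"
    by (simp add: sum.distrib sum_distrib_left[symmetric])
  finally have S: "(\<Sum>j\<in>{1..J}. Lim (at_left (node J j)) (\<lambda>x. c1 * h1 x + c2 * h2 x)
          + Lim (at_right (node J (j - 1))) (\<lambda>x. c1 * h1 x + c2 * h2 x))
      = c1 * (\<Sum>j\<in>{1..J}. Lim (at_left (node J j)) h1 + Lim (at_right (node J (j - 1))) h1)
          + c2 * (\<Sum>j\<in>{1..J}. Lim (at_left (node J j)) h2 + Lim (at_right (node J (j - 1))) h2)" .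
  show ?thesis unfolding Lump_def S by (rule aux_lin)
qed

lemma IS_lin:
  assumes J: "J \<ge> 1" and h1: "PC J h1" and h2: "PC J h2"
    and e: "eqv J h (\<lambda>x. c1 * h1 x + c2 * h2 x)"
  shows "IS l J h = c1 * IS l J h1 + c2 * IS l J h2"
proof -
  have "IS l J h = IS l J (\<lambda>x. c1 * h1 x + c2 * h2 x)" using IS_eqv[OF J e] .
  also have "\<dots> = c1 * IS l J h1 + c2 * IS l J h2"
  proof (cases l)
    case True then show ?thesis using Lump_lin[OF J h1 h2] by (simp add: IS_def)
  next
    case False
    have i1: "h1 integrable_on {0..1}" and i2: "h2 integrable_on {0..1}"
      using PC_integrable[OF J] h1 h2 by auto
    have "integral {0..1} (\<lambda>x. c1 * h1 x + c2 * h2 x)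
        = integral {0..1} (\<lambda>x. c1 * h1 x) + integral {0..1} (\<lambda>x. c2 * h2 x)"
      using integral_add[OF integrable_on_cmult_left[OF i1] integrable_on_cmult_left[OF i2]] by simp
    then show ?thesis using False by (simp add: IS_def)
  qed
  finally show ?thesis .
qed

lemma IS_zero:
  assumes J: "J \<ge> 1" and e: "eqv J h (\<lambda>x. 0)"
  shows "IS l J h = 0"
proof -
  have "IS l J h = 0 * IS l J (\<lambda>x. 0) + 0 * IS l J (\<lambda>x. 0)"
    by (rule IS_lin[OF J PC_const PC_const]) (use e in \<open>simp add: eqv_def\<close>)
  then show ?thesis by simp
qed



lemma Vh_add: "f \<in> Vh p J \<Longrightarrow> g \<in> Vh p J \<Longrightarrow> (\<lambda>x. f x + g x) \<in> Vh p J"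
proof -
  assume f: "f \<in> Vh p J" and g: "g \<in> Vh p J"
  have aff: "\<exists>a b. \<forall>x\<in>{node J (j - 1)..node J j}. f x + g x = a * x + b" if j: "j \<in> {1..J}" for j
  proof -
    obtain a1 b1 where 1: "\<forall>x\<in>{node J (j - 1)..node J j}. f x = a1 * x + b1" using f j unfolding Vh_def by blast
    obtain a2 b2 where 2: "\<forall>x\<in>{node J (j - 1)..node J j}. g x = a2 * x + b2" using g j unfolding Vh_def by blast
    show ?thesis using 1 2 by (intro exI[of _ "a1 + a2"] exI[of _ "b1 + b2"]) (simp add: algebra_simps)
  qed
  show ?thesis using f g aff unfolding Vh_def by (auto intro: continuous_on_add)
qed

lemma Vh_scale: "f \<in> Vh p J \<Longrightarrow> (\<lambda>x. c * f x) \<in> Vh p J"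
proof -
  assume f: "f \<in> Vh p J"
  have aff: "\<exists>a b. \<forall>x\<in>{node J (j - 1)..node J j}. c * f x = a * x + b" if j: "j \<in> {1..J}" for j
  proof -
    obtain a1 b1 where 1: "\<forall>x\<in>{node J (j - 1)..node J j}. f x = a1 * x + b1" using f j unfolding Vh_def by blast
    show ?thesis using 1 by (intro exI[of _ "c * a1"] exI[of _ "c * b1"]) (simp add: algebra_simps)
  qed
  show ?thesis using f aff unfolding Vh_def by (auto intro: continuous_on_mult)
qed

lemma Vh_zero: "(\<lambda>x. 0) \<in> Vh p J"
  unfolding Vh_def by (auto intro!: exI[of _ 0])

lemma VVh_iff: "X \<in> VVh p J \<longleftrightarrow> (\<forall>i. (\<lambda>x. X x $ i) \<in> Vh p J)"
  by (simp add: VVh_def)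

lemma VVh_add: "f \<in> VVh p J \<Longrightarrow> g \<in> VVh p J \<Longrightarrow> (\<lambda>x. f x + g x) \<in> VVh p J"
  unfolding VVh_iff using Vh_add by fastforce

lemma VVh_scale: "f \<in> VVh p J \<Longrightarrow> (\<lambda>x. c *\<^sub>R f x) \<in> VVh p J"
  unfolding VVh_iff using Vh_scale by fastforce

lemma VVh_zero: "(\<lambda>x. 0) \<in> VVh p J"
  unfolding VVh_iff using Vh_zero by simp

lemma VVhD_add: "f \<in> VVhD p J dD d0 d1 d2 \<Longrightarrow> g \<in> VVhD p J dD d0 d1 d2 \<Longrightarrow> (\<lambda>x. f x + g x) \<in> VVhD p J dD d0 d1 d2"
  unfolding VVhD_def VVh0_def using VVh_add by (auto simp: inner_add_left)

lemma VVhD_scale: "f \<in> VVhD p J dD d0 d1 d2 \<Longrightarrow> (\<lambda>x. c *\<^sub>R f x) \<in> VVhD p J dD d0 d1 d2"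
  unfolding VVhD_def VVh0_def using VVh_scale by auto

lemma VVhD_zero: "(\<lambda>x. 0) \<in> VVhD p J dD d0 d1 d2"
  unfolding VVhD_def VVh0_def using VVh_zero by auto

lemma VVhD_VVh: "f \<in> VVhD p J dD d0 d1 d2 \<Longrightarrow> f \<in> VVh p J"
  unfolding VVhD_def VVh0_def by auto

lemma W_add: "f \<in> W_sharp l p J d0 \<Longrightarrow> g \<in> W_sharp l p J d0 \<Longrightarrow> (\<lambda>x. f x + g x) \<in> W_sharp l p J d0"
  unfolding W_sharp_def Wh0_def using Vh_add by auto

lemma W_scale: "f \<in> W_sharp l p J d0 \<Longrightarrow> (\<lambda>x. c * f x) \<in> W_sharp l p J d0"
  unfolding W_sharp_def Wh0_def using Vh_scale by auto

lemma W_zero: "(\<lambda>x. 0) \<in> W_sharp l p J d0"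
  unfolding W_sharp_def Wh0_def using Vh_zero by auto

lemma W_Vh: "f \<in> W_sharp l p J d0 \<Longrightarrow> f \<in> Vh p J"
  unfolding W_sharp_def Wh0_def by (auto split: if_splits)

lemma Vh_cont: "f \<in> Vh p J \<Longrightarrow> continuous_on {0..1} f"
  unfolding Vh_def by auto

lemma Vh_out: "f \<in> Vh p J \<Longrightarrow> x \<notin> {0..1} \<Longrightarrow> f x = 0"
  unfolding Vh_def by auto

lemma Vh_aff: "f \<in> Vh p J \<Longrightarrow> j \<in> {1..J} \<Longrightarrow> \<exists>a b. \<forall>x\<in>cls J j. f x = a * x + b"
  unfolding Vh_def cls_def by auto

lemma VVh_cont: "X \<in> VVh p J \<Longrightarrow> continuous_on {0..1} X"
proof -
  assume X: "X \<in> VVh p J"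
  have "continuous_on {0..1} (\<lambda>x. \<chi> i. X x $ i)"
    by (rule continuous_on_vec_lambda) (use X Vh_cont in \<open>auto simp: VVh_iff\<close>)
  then show ?thesis by simp
qed

lemma VVh_out: "X \<in> VVh p J \<Longrightarrow> x \<notin> {0..1} \<Longrightarrow> X x = 0"
proof -
  assume X: "X \<in> VVh p J" and x: "x \<notin> {0..1}"
  have "X x $ i = 0" for i using Vh_out[of "\<lambda>x. X x $ i" p J x] X x unfolding VVh_iff by blast
  then show ?thesis by (simp add: vec_eq_iff)
qed

lemma VVh_aff:
  assumes X: "X \<in> VVh p J" and j: "j \<in> {1..J}"
  shows "\<exists>A B. \<forall>x\<in>cls J j. X x = x *\<^sub>R A + B"
proof -
  have "\<forall>i. \<exists>ab. \<forall>x\<in>cls J j. X x $ i = fst ab * x + snd ab"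
    using Vh_aff[OF _ j] X unfolding VVh_iff by fastforce
  then obtain f where f: "\<forall>i. \<forall>x\<in>cls J j. X x $ i = fst (f i) * x + snd (f i)"
    by (rule choice[THEN exE]) blast
  show ?thesis
    by (intro exI[of _ "\<chi> i. fst (f i)"] exI[of _ "\<chi> i. snd (f i)"])
       (use f in \<open>auto simp: vec_eq_iff mult.commute\<close>)
qed

lemma Xrho_aff:
  assumes j: "j \<in> {1..J}" and x: "x \<in> opn J j"
    and A: "\<forall>y\<in>cls J j. X y = y *\<^sub>R A + B"
  shows "Xrho X x = A"
proof -
  have d: "((\<lambda>y. y *\<^sub>R A + B) has_vector_derivative A) (at x)"
    unfolding has_vector_derivative_def by (auto intro!: derivative_eq_intros)
  have "(X has_vector_derivative A) (at x)"
  proof (rule has_vector_derivative_transform_within_open[OF d _ x])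
    show "open (opn J j)" by (simp add: opn_def)
    fix y assume "y \<in> opn J j"
    then have "y \<in> cls J j" using opn_sub_cls by blast
    then show "y *\<^sub>R A + B = X y" using A by simp
  qed
  then show ?thesis unfolding Xrho_def by (rule vector_derivative_at)
qed

lemma Xrho_pcst:
  assumes X: "X \<in> VVh p J"
  shows "PCst J (Xrho X)"
  unfolding PCst_def
proof
  fix j assume j: "j \<in> {1..J}"
  obtain A B where "\<forall>x\<in>cls J j. X x = x *\<^sub>R A + B" using VVh_aff[OF X j] by blast
  then show "\<exists>c. \<forall>x\<in>opn J j. Xrho X x = c" using Xrho_aff[OF j] by (intro exI[of _ A]) blast
qed

lemma Xrho_zero: "Xrho (\<lambda>y. 0::real^2) x = 0"
  unfolding Xrho_def by (rule vector_derivative_at) (rule has_vector_derivative_const)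

lemma Xrho_add:
  assumes f: "f \<in> VVh p J" and g: "g \<in> VVh p J"
  shows "eqv J (Xrho (\<lambda>y. f y + g y)) (\<lambda>x. Xrho f x + Xrho g x)"
  unfolding eqv_def
proof (intro ballI)
  fix j x assume j: "j \<in> {1..J}" and x: "x \<in> opn J j"
  obtain A B where A: "\<forall>x\<in>cls J j. f x = x *\<^sub>R A + B" using VVh_aff[OF f j] by blast
  obtain A' B' where A': "\<forall>x\<in>cls J j. g x = x *\<^sub>R A' + B'" using VVh_aff[OF g j] by blast
  have "\<forall>y\<in>cls J j. f y + g y = y *\<^sub>R (A + A') + (B + B')"
    using A A' by (simp add: algebra_simps)
  then have "Xrho (\<lambda>y. f y + g y) x = A + A'" by (rule Xrho_aff[OF j x])
  moreover have "Xrho f x = A" by (rule Xrho_aff[OF j x A])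
  moreover have "Xrho g x = A'" by (rule Xrho_aff[OF j x A'])
  ultimately show "Xrho (\<lambda>y. f y + g y) x = Xrho f x + Xrho g x" by simp
qed

lemma Xrho_scale:
  assumes f: "f \<in> VVh p J"
  shows "eqv J (Xrho (\<lambda>y. c *\<^sub>R f y)) (\<lambda>x. c *\<^sub>R Xrho f x)"
  unfolding eqv_def
proof (intro ballI)
  fix j x assume j: "j \<in> {1..J}" and x: "x \<in> opn J j"
  obtain A B where A: "\<forall>x\<in>cls J j. f x = x *\<^sub>R A + B" using VVh_aff[OF f j] by blast
  have "\<forall>y\<in>cls J j. c *\<^sub>R f y = y *\<^sub>R (c *\<^sub>R A) + c *\<^sub>R B"
    using A by (simp add: algebra_simps)
  then have "Xrho (\<lambda>y. c *\<^sub>R f y) x = c *\<^sub>R A" by (rule Xrho_aff[OF j x])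
  moreover have "Xrho f x = A" by (rule Xrho_aff[OF j x A])
  ultimately show "Xrho (\<lambda>y. c *\<^sub>R f y) x = c *\<^sub>R Xrho f x" by simp
qed

lemma assmA_pos:
  assumes J: "J \<ge> 1" and X: "X \<in> VVh p J" and A: "assmA d0 X" and j: "j \<in> {1..J}" and x: "x \<in> opn J j"
  shows "norm (Xrho X x) > 0"
proof (rule ccontr)
  assume "\<not> norm (Xrho X x) > 0"
  then have z: "Xrho X x = 0" by simp
  have c: "\<forall>y\<in>opn J j. Xrho X y = 0"
  proof
    fix y assume y: "y \<in> opn J j"
    obtain A B where AB: "\<forall>x\<in>cls J j. X x = x *\<^sub>R A + B" using VVh_aff[OF X j] by blast
    show "Xrho X y = 0" using Xrho_aff[OF j y AB] Xrho_aff[OF j x AB] z by simp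
  qed
  obtain N where N: "N \<in> null_sets lborel"
    "{y \<in> space lborel. \<not> (y \<in> {0..1} \<longrightarrow> 0 < norm (Xrho X y))} \<subseteq> N"
    using A unfolding assmA_def eventually_ae_filter by blast
  have "opn J j \<subseteq> N"
  proof
    fix y assume y: "y \<in> opn J j"
    then have "y \<in> {0<..<1}" using opn_sub[OF J j] by blast
    then have "y \<in> {y \<in> space lborel. \<not> (y \<in> {0..1} \<longrightarrow> 0 < norm (Xrho X y))}"
      using c y by auto
    then show "y \<in> N" using N(2) by blast
  qed
  then have "emeasure lborel (opn J j) \<le> emeasure lborel N" by (rule emeasure_mono) (use N in auto)
  also have "\<dots> = 0" using N(1) by auto
  finally have "emeasure lborel (opn J j) = 0" by simp
  moreover have "emeasure lborel (opn J j) > 0"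
    using node_lt[OF J j] by (simp add: opn_def)
  ultimately show False by simp
qed



definition fA1 :: "bool \<Rightarrow> nat \<Rightarrow> (real \<Rightarrow> real^2) \<Rightarrow> real \<Rightarrow> (real \<Rightarrow> real^2) \<Rightarrow> (real \<Rightarrow> real) \<Rightarrow> real" where
  "fA1 l J X dt d c = IS l J (\<lambda>x. (X x \<bullet> e1) * (1 / dt) * (d x \<bullet> nu X x) * (c x * norm (Xrho X x)))"
definition fM :: "bool \<Rightarrow> nat \<Rightarrow> (real \<Rightarrow> real^2) \<Rightarrow> (real \<Rightarrow> real) \<Rightarrow> (real \<Rightarrow> real) \<Rightarrow> real" where
  "fM l J X k c = IS l J (\<lambda>x. (X x \<bullet> e1) * k x * (c x * norm (Xrho X x)))"
definition fA2 :: "bool \<Rightarrow> nat \<Rightarrow> (real \<Rightarrow> real^2) \<Rightarrow> (real \<Rightarrow> real) \<Rightarrow> (real \<Rightarrow> real^2) \<Rightarrow> real" where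
  "fA2 l J X k eta = IS l J (\<lambda>x. (X x \<bullet> e1) * k x * (nu X x \<bullet> eta x) * norm (Xrho X x))"
definition fS :: "nat \<Rightarrow> (real \<Rightarrow> real^2) \<Rightarrow> (real \<Rightarrow> real^2) \<Rightarrow> (real \<Rightarrow> real^2) \<Rightarrow> real" where
  "fS J X d eta = IS False J (\<lambda>x. (X x \<bullet> e1) * (1 / norm (Xrho X x)) * (Xrho d x \<bullet> Xrho eta x))"
definition fG :: "nat \<Rightarrow> (real \<Rightarrow> real^2) \<Rightarrow> (real \<Rightarrow> real) \<Rightarrow> real set \<Rightarrow> real set \<Rightarrow> (real \<Rightarrow> real^2) \<Rightarrow> real" where
  "fG J X rh d1 d2 eta = - (\<Sum>q\<in>d1. rh q * (X q \<bullet> e1) * (eta q \<bullet> e2))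
     - (\<Sum>q\<in>d2. rh q * (X q \<bullet> e1) * (eta q \<bullet> e1))
     - IS False J (\<lambda>x. (eta x \<bullet> e1) * norm (Xrho X x))
     - IS False J (\<lambda>x. (X x \<bullet> e1) * (1 / norm (Xrho X x)) * (Xrho X x \<bullet> Xrho eta x))"

lemma IS_add':
  assumes J: "J \<ge> 1" and "PC J h1" "PC J h2" and "\<And>x. h x = h1 x + h2 x"
  shows "IS l J h = IS l J h1 + IS l J h2"
  using IS_lin[OF J assms(2,3), of h 1 1 l] assms(4) by (simp add: eqv_def)

lemma IS_add_eqv:
  assumes J: "J \<ge> 1" and "PC J h1" "PC J h2" and "eqv J h (\<lambda>x. h1 x + h2 x)"
  shows "IS l J h = IS l J h1 + IS l J h2"
  using IS_lin[OF J assms(2,3), of h 1 1 l] assms(4) by simp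

lemma IS_sc':
  assumes J: "J \<ge> 1" and "PC J h1" and "\<And>x. h x = c * h1 x"
  shows "IS l J h = c * IS l J h1"
  using IS_lin[OF J assms(2,2), of h c 0 l] assms(3) by (simp add: eqv_def)

lemma IS_sc_eqv:
  assumes J: "J \<ge> 1" and "PC J h1" and "eqv J h (\<lambda>x. c * h1 x)"
  shows "IS l J h = c * IS l J h1"
  using IS_lin[OF J assms(2,2), of h c 0 l] assms(3) by simp

lemma IS_zero':
  assumes J: "J \<ge> 1" and "\<And>x. h x = 0"
  shows "IS l J h = 0"
  using IS_zero[OF J, of h l] assms(2) by (simp add: eqv_def)

lemma pc_X1: "J \<ge> 1 \<Longrightarrow> X \<in> VVh p J \<Longrightarrow> PC J (\<lambda>x. X x \<bullet> e1)"
  by (intro PC_cont continuous_on_inner VVh_cont continuous_on_const)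

lemma pc_vec: "J \<ge> 1 \<Longrightarrow> X \<in> VVh p J \<Longrightarrow> PC J X"
  by (intro PC_cont VVh_cont)

lemma pc_sc: "J \<ge> 1 \<Longrightarrow> k \<in> Vh p J \<Longrightarrow> PC J k"
  by (intro PC_cont Vh_cont)

lemma pc_rho: "X \<in> VVh p J \<Longrightarrow> PC J (Xrho X)"
  by (rule PCst_PC[OF Xrho_pcst])

lemma pc_nX: "X \<in> VVh p J \<Longrightarrow> PC J (\<lambda>x. norm (Xrho X x))"
  by (rule PCst_PC[OF PCst_comp[OF Xrho_pcst, where f=norm]])

lemma pc_inv: "X \<in> VVh p J \<Longrightarrow> PC J (\<lambda>x. 1 / norm (Xrho X x))"
  by (rule PCst_PC[OF PCst_comp[OF Xrho_pcst, where f="\<lambda>v. 1 / norm v"]])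

lemma pc_nu: "X \<in> VVh p J \<Longrightarrow> PC J (nu X)"
proof -
  assume X: "X \<in> VVh p J"
  have "PCst J (\<lambda>x. (\<lambda>v. (1 / norm v) *\<^sub>R (- perp v)) (Xrho X x))"
    by (rule PCst_comp[OF Xrho_pcst[OF X]])
  moreover have "nu X = (\<lambda>x. (\<lambda>v. (1 / norm v) *\<^sub>R (- perp v)) (Xrho X x))"
    by (rule ext) (simp only: nu_def)
  ultimately show ?thesis using PCst_PC by metis
qed

lemmas pcI = PC_mult PC_inner PC_scaleR PC_const

lemma fA1_add_d:
  assumes J: "J \<ge> 1" and X: "X \<in> VVh p J" and d: "d \<in> VVh p J" "d' \<in> VVh p J" and c: "c \<in> Vh p J"
  shows "fA1 l J X dt (\<lambda>x. d x + d' x) c = fA1 l J X dt d c + fA1 l J X dt d' c"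
  unfolding fA1_def
  by (rule IS_add'[OF J], (intro pcI pc_X1[OF J X] pc_vec[OF J X] pc_nX[OF X] pc_nu[OF X] pc_vec[OF J d(1)]
    pc_vec[OF J d(2)] pc_sc[OF J c])+, simp add: inner_add_left distrib_left distrib_right)

lemma fA1_add_c:
  assumes J: "J \<ge> 1" and X: "X \<in> VVh p J" and d: "d \<in> VVh p J" and c: "c \<in> Vh p J" "c' \<in> Vh p J"
  shows "fA1 l J X dt d (\<lambda>x. c x + c' x) = fA1 l J X dt d c + fA1 l J X dt d c'"
  unfolding fA1_def
  by (rule IS_add'[OF J], (intro pcI pc_X1[OF J X] pc_vec[OF J X] pc_nX[OF X] pc_inv[OF X] pc_nu[OF X] pc_vec[OF J d] pc_sc[OF J c(1)] pc_sc[OF J c(2)])+, simp add: distrib_left distrib_right)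

lemma fA1_sc_d:
  assumes J: "J \<ge> 1" and X: "X \<in> VVh p J" and d: "d \<in> VVh p J" and c: "c \<in> Vh p J"
  shows "fA1 l J X dt (\<lambda>x. r *\<^sub>R d x) c = r * fA1 l J X dt d c"
  unfolding fA1_def
  by (rule IS_sc'[OF J], (intro pcI pc_X1[OF J X] pc_vec[OF J X] pc_nX[OF X] pc_inv[OF X] pc_nu[OF X] pc_vec[OF J d] pc_sc[OF J c])+, simp add: algebra_simps)

lemma fA1_sc_c:
  assumes J: "J \<ge> 1" and X: "X \<in> VVh p J" and d: "d \<in> VVh p J" and c: "c \<in> Vh p J"
  shows "fA1 l J X dt d (\<lambda>x. r * c x) = r * fA1 l J X dt d c"
  unfolding fA1_def
  by (rule IS_sc'[OF J], (intro pcI pc_X1[OF J X] pc_vec[OF J X] pc_nX[OF X] pc_inv[OF X] pc_nu[OF X] pc_vec[OF J d] pc_sc[OF J c])+, simp add: algebra_simps)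

lemma fM_add_k:
  assumes J: "J \<ge> 1" and X: "X \<in> VVh p J" and k: "k \<in> Vh p J" "k' \<in> Vh p J" and c: "c \<in> Vh p J"
  shows "fM l J X (\<lambda>x. k x + k' x) c = fM l J X k c + fM l J X k' c"
  unfolding fM_def
  by (rule IS_add'[OF J], (intro pcI pc_X1[OF J X] pc_vec[OF J X] pc_nX[OF X] pc_inv[OF X] pc_nu[OF X] pc_sc[OF J k(1)] pc_sc[OF J k(2)] pc_sc[OF J c])+, simp add: distrib_left distrib_right)

lemma fM_add_c:
  assumes J: "J \<ge> 1" and X: "X \<in> VVh p J" and k: "k \<in> Vh p J" and c: "c \<in> Vh p J" "c' \<in> Vh p J"
  shows "fM l J X k (\<lambda>x. c x + c' x) = fM l J X k c + fM l J X k c'"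
  unfolding fM_def
  by (rule IS_add'[OF J], (intro pcI pc_X1[OF J X] pc_vec[OF J X] pc_nX[OF X] pc_inv[OF X] pc_nu[OF X] pc_sc[OF J k] pc_sc[OF J c(1)] pc_sc[OF J c(2)])+, simp add: distrib_left distrib_right)

lemma fM_sc_k:
  assumes J: "J \<ge> 1" and X: "X \<in> VVh p J" and k: "k \<in> Vh p J" and c: "c \<in> Vh p J"
  shows "fM l J X (\<lambda>x. r * k x) c = r * fM l J X k c"
  unfolding fM_def
  by (rule IS_sc'[OF J], (intro pcI pc_X1[OF J X] pc_vec[OF J X] pc_nX[OF X] pc_inv[OF X] pc_nu[OF X] pc_sc[OF J k] pc_sc[OF J c])+, simp add: algebra_simps)

lemma fM_sc_c:
  assumes J: "J \<ge> 1" and X: "X \<in> VVh p J" and k: "k \<in> Vh p J" and c: "c \<in> Vh p J"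
  shows "fM l J X k (\<lambda>x. r * c x) = r * fM l J X k c"
  unfolding fM_def
  by (rule IS_sc'[OF J], (intro pcI pc_X1[OF J X] pc_vec[OF J X] pc_nX[OF X] pc_inv[OF X] pc_nu[OF X] pc_sc[OF J k] pc_sc[OF J c])+, simp add: algebra_simps)

lemma fA2_add_k:
  assumes J: "J \<ge> 1" and X: "X \<in> VVh p J" and k: "k \<in> Vh p J" "k' \<in> Vh p J" and e: "eta \<in> VVh p J"
  shows "fA2 l J X (\<lambda>x. k x + k' x) eta = fA2 l J X k eta + fA2 l J X k' eta"
  unfolding fA2_def
  by (rule IS_add'[OF J], (intro pcI pc_X1[OF J X] pc_vec[OF J X] pc_nX[OF X] pc_inv[OF X] pc_nu[OF X] pc_sc[OF J k(1)] pc_sc[OF J k(2)] pc_vec[OF J e])+, simp add: distrib_left distrib_right)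

lemma fA2_add_e:
  assumes J: "J \<ge> 1" and X: "X \<in> VVh p J" and k: "k \<in> Vh p J" and e: "eta \<in> VVh p J" "eta' \<in> VVh p J"
  shows "fA2 l J X k (\<lambda>x. eta x + eta' x) = fA2 l J X k eta + fA2 l J X k eta'"
  unfolding fA2_def
  by (rule IS_add'[OF J], (intro pcI pc_X1[OF J X] pc_vec[OF J X] pc_nX[OF X] pc_inv[OF X] pc_nu[OF X] pc_sc[OF J k] pc_vec[OF J e(1)] pc_vec[OF J e(2)])+, simp add: inner_add_right distrib_left distrib_right)

lemma fA2_sc_k:
  assumes J: "J \<ge> 1" and X: "X \<in> VVh p J" and k: "k \<in> Vh p J" and e: "eta \<in> VVh p J"
  shows "fA2 l J X (\<lambda>x. r * k x) eta = r * fA2 l J X k eta"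
  unfolding fA2_def
  by (rule IS_sc'[OF J], (intro pcI pc_X1[OF J X] pc_vec[OF J X] pc_nX[OF X] pc_inv[OF X] pc_nu[OF X] pc_sc[OF J k] pc_vec[OF J e])+, simp add: algebra_simps)

lemma fA2_sc_e:
  assumes J: "J \<ge> 1" and X: "X \<in> VVh p J" and k: "k \<in> Vh p J" and e: "eta \<in> VVh p J"
  shows "fA2 l J X k (\<lambda>x. r *\<^sub>R eta x) = r * fA2 l J X k eta"
  unfolding fA2_def
  by (rule IS_sc'[OF J], (intro pcI pc_X1[OF J X] pc_vec[OF J X] pc_nX[OF X] pc_inv[OF X] pc_nu[OF X] pc_sc[OF J k] pc_vec[OF J e])+, simp add: algebra_simps)

lemma fS_add_d:
  assumes J: "J \<ge> 1" and X: "X \<in> VVh p J" and d: "d \<in> VVh p J" "d' \<in> VVh p J" and e: "eta \<in> VVh p J"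
  shows "fS J X (\<lambda>x. d x + d' x) eta = fS J X d eta + fS J X d' eta"
  unfolding fS_def
  by (rule IS_add_eqv[OF J], (intro pcI pc_X1[OF J X] pc_vec[OF J X] pc_nX[OF X] pc_inv[OF X] pc_nu[OF X] pc_rho[OF d(1)] pc_rho[OF d(2)] pc_rho[OF e])+, use Xrho_add[OF d(1) d(2)] in \<open>simp add: eqv_def inner_add_left distrib_left add_divide_distrib\<close>)

lemma fS_add_e:
  assumes J: "J \<ge> 1" and X: "X \<in> VVh p J" and d: "d \<in> VVh p J" and e: "eta \<in> VVh p J" "eta' \<in> VVh p J"
  shows "fS J X d (\<lambda>x. eta x + eta' x) = fS J X d eta + fS J X d eta'"
  unfolding fS_def
  by (rule IS_add_eqv[OF J], (intro pcI pc_X1[OF J X] pc_vec[OF J X] pc_nX[OF X] pc_inv[OF X] pc_nu[OF X] pc_rho[OF d] pc_rho[OF e(1)] pc_rho[OF e(2)])+, use Xrho_add[OF e(1) e(2)] in \<open>simp add: eqv_def inner_add_right distrib_left add_divide_distrib\<close>)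

lemma fS_sc_d:
  assumes J: "J \<ge> 1" and X: "X \<in> VVh p J" and d: "d \<in> VVh p J" and e: "eta \<in> VVh p J"
  shows "fS J X (\<lambda>x. r *\<^sub>R d x) eta = r * fS J X d eta"
  unfolding fS_def
  by (rule IS_sc_eqv[OF J], (intro pcI pc_X1[OF J X] pc_vec[OF J X] pc_nX[OF X] pc_inv[OF X] pc_nu[OF X] pc_rho[OF d] pc_rho[OF e])+, use Xrho_scale[OF d] in \<open>simp add: eqv_def algebra_simps\<close>)

lemma fS_sc_e:
  assumes J: "J \<ge> 1" and X: "X \<in> VVh p J" and d: "d \<in> VVh p J" and e: "eta \<in> VVh p J"
  shows "fS J X d (\<lambda>x. r *\<^sub>R eta x) = r * fS J X d eta"
  unfolding fS_def
  by (rule IS_sc_eqv[OF J], (intro pcI pc_X1[OF J X] pc_vec[OF J X] pc_nX[OF X] pc_inv[OF X] pc_nu[OF X] pc_rho[OF d] pc_rho[OF e])+, use Xrho_scale[OF e] in \<open>simp add: eqv_def algebra_simps\<close>)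

lemma fG_add:
  assumes J: "J \<ge> 1" and X: "X \<in> VVh p J" and e: "eta \<in> VVh p J" "eta' \<in> VVh p J"
  shows "fG J X rh d1 d2 (\<lambda>x. eta x + eta' x) = fG J X rh d1 d2 eta + fG J X rh d1 d2 eta'"
proof -
  have s1: "(\<Sum>q\<in>d1. rh q * (X q \<bullet> e1) * ((eta q + eta' q) \<bullet> e2))
      = (\<Sum>q\<in>d1. rh q * (X q \<bullet> e1) * (eta q \<bullet> e2)) + (\<Sum>q\<in>d1. rh q * (X q \<bullet> e1) * (eta' q \<bullet> e2))"
    by (simp add: inner_add_left distrib_left sum.distrib)
  have s2: "(\<Sum>q\<in>d2. rh q * (X q \<bullet> e1) * ((eta q + eta' q) \<bullet> e1))
      = (\<Sum>q\<in>d2. rh q * (X q \<bullet> e1) * (eta q \<bullet> e1)) + (\<Sum>q\<in>d2. rh q * (X q \<bullet> e1) * (eta' q \<bullet> e1))"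
    by (simp add: inner_add_left distrib_left sum.distrib)
  have i1: "IS False J (\<lambda>x. ((eta x + eta' x) \<bullet> e1) * norm (Xrho X x))
      = IS False J (\<lambda>x. (eta x \<bullet> e1) * norm (Xrho X x)) + IS False J (\<lambda>x. (eta' x \<bullet> e1) * norm (Xrho X x))"
    by (rule IS_add'[OF J], (intro pcI pc_nX[OF X] pc_vec[OF J e(1)] pc_vec[OF J e(2)])+,
        simp add: inner_add_left distrib_right)
  have i2: "IS False J (\<lambda>x. (X x \<bullet> e1) * (1 / norm (Xrho X x)) * (Xrho X x \<bullet> Xrho (\<lambda>x. eta x + eta' x) x))
      = IS False J (\<lambda>x. (X x \<bullet> e1) * (1 / norm (Xrho X x)) * (Xrho X x \<bullet> Xrho eta x))
      + IS False J (\<lambda>x. (X x \<bullet> e1) * (1 / norm (Xrho X x)) * (Xrho X x \<bullet> Xrho eta' x))"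
    by (rule IS_add_eqv[OF J], (intro pcI pc_X1[OF J X] pc_vec[OF J X] pc_inv[OF X] pc_rho[OF X] pc_rho[OF e(1)] pc_rho[OF e(2)])+,
        use Xrho_add[OF e(1) e(2)] in \<open>simp add: eqv_def inner_add_right distrib_left add_divide_distrib\<close>)
  show ?thesis unfolding fG_def using s1 s2 i1 i2 by linarith
qed

lemma fG_sc:
  assumes J: "J \<ge> 1" and X: "X \<in> VVh p J" and e: "eta \<in> VVh p J"
  shows "fG J X rh d1 d2 (\<lambda>x. r *\<^sub>R eta x) = r * fG J X rh d1 d2 eta"
proof -
  have s1: "(\<Sum>q\<in>d1. rh q * (X q \<bullet> e1) * ((r *\<^sub>R eta q) \<bullet> e2))
      = r * (\<Sum>q\<in>d1. rh q * (X q \<bullet> e1) * (eta q \<bullet> e2))"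
    by (simp add: sum_distrib_left algebra_simps)
  have s2: "(\<Sum>q\<in>d2. rh q * (X q \<bullet> e1) * ((r *\<^sub>R eta q) \<bullet> e1))
      = r * (\<Sum>q\<in>d2. rh q * (X q \<bullet> e1) * (eta q \<bullet> e1))"
    by (simp add: sum_distrib_left algebra_simps)
  have i1: "IS False J (\<lambda>x. ((r *\<^sub>R eta x) \<bullet> e1) * norm (Xrho X x))
      = r * IS False J (\<lambda>x. (eta x \<bullet> e1) * norm (Xrho X x))"
    by (rule IS_sc'[OF J], (intro pcI pc_nX[OF X] pc_vec[OF J e])+, simp)
  have i2: "IS False J (\<lambda>x. (X x \<bullet> e1) * (1 / norm (Xrho X x)) * (Xrho X x \<bullet> Xrho (\<lambda>x. r *\<^sub>R eta x) x))
      = r * IS False J (\<lambda>x. (X x \<bullet> e1) * (1 / norm (Xrho X x)) * (Xrho X x \<bullet> Xrho eta x))"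
    by (rule IS_sc_eqv[OF J], (intro pcI pc_X1[OF J X] pc_vec[OF J X] pc_inv[OF X] pc_rho[OF X] pc_rho[OF e])+,
        use Xrho_scale[OF e] in \<open>simp add: eqv_def\<close>)
  show ?thesis unfolding fG_def using s1 s2 i1 i2 by (simp add: algebra_simps)
qed

lemma fA1_zero: "J \<ge> 1 \<Longrightarrow> fA1 l J X dt d (\<lambda>x. 0) = 0"
  unfolding fA1_def by (rule IS_zero') simp_all
lemma fM_zero: "J \<ge> 1 \<Longrightarrow> fM l J X k (\<lambda>x. 0) = 0"
  unfolding fM_def by (rule IS_zero') simp_all
lemma fM_zero_k: "J \<ge> 1 \<Longrightarrow> fM l J X (\<lambda>x. 0) c = 0"
  unfolding fM_def by (rule IS_zero') simp_all
lemma fA2_zero: "J \<ge> 1 \<Longrightarrow> fA2 l J X k (\<lambda>x. 0) = 0"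
  unfolding fA2_def by (rule IS_zero') simp_all
lemma fA2_zero_k: "J \<ge> 1 \<Longrightarrow> fA2 l J X (\<lambda>x. 0) e = 0"
  unfolding fA2_def by (rule IS_zero') simp_all
lemma fS_zero: "J \<ge> 1 \<Longrightarrow> fS J X d (\<lambda>x. 0) = 0"
  unfolding fS_def by (rule IS_zero') (simp_all add: Xrho_zero)
lemma fG_zero: "J \<ge> 1 \<Longrightarrow> fG J X rh d1 d2 (\<lambda>x. 0) = 0"
proof -
  assume J: "J \<ge> 1"
  have "IS False J (\<lambda>x. ((0::real^2) \<bullet> e1) * norm (Xrho X x)) = 0" by (rule IS_zero'[OF J]) simp
  moreover have "IS False J (\<lambda>x. (X x \<bullet> e1) * (1 / norm (Xrho X x)) * (Xrho X x \<bullet> Xrho (\<lambda>x. 0) x)) = 0"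
    by (rule IS_zero'[OF J]) (simp add: Xrho_zero)
  ultimately show ?thesis unfolding fG_def by simp
qed

lemma sum_fun_apply: "(\<Sum>x\<in>S. F x) n = (\<Sum>x\<in>S. F x n)"
  for F :: "'a \<Rightarrow> 'b \<Rightarrow> 'c::comm_monoid_add"
  by (induction S rule: infinite_finite_induct) auto

lemma Vh_zero_nodes:
  assumes J: "J \<ge> 1" and f: "f \<in> Vh p J" and z: "\<forall>j\<le>J. f (node J j) = 0"
  shows "f x = 0"
proof (cases "x \<in> {0..1}")
  case False then show ?thesis using Vh_out[OF f] by blast
next
  case True
  then obtain j where j: "j \<in> {1..J}" "x \<in> cls J j" using cover_cls[OF J] by blast
  obtain a b where ab: "\<forall>y\<in>cls J j. f y = a * y + b" using Vh_aff[OF f j(1)] by blast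
  have lt: "node J (j-1) < node J j" using node_lt[OF J j(1)] .
  have "f (node J (j-1)) = a * node J (j-1) + b" using ab lt by (auto simp: cls_def)
  moreover have "f (node J (j-1)) = 0" using z j(1) by auto
  ultimately have e1: "a * node J (j-1) + b = 0" by simp
  have "f (node J j) = a * node J j + b" using ab lt by (auto simp: cls_def)
  moreover have "f (node J j) = 0" using z j(1) by auto
  ultimately have e2: "a * node J j + b = 0" by simp
  have "a * (node J j - node J (j-1)) = (a * node J j + b) - (a * node J (j-1) + b)"
    by (simp add: algebra_simps)
  then have "a * (node J j - node J (j-1)) = 0" unfolding e1 e2 by simp
  then have a0: "a = 0" using lt by simp
  then have "b = 0" using e2 by simp
  then show ?thesis using ab j(2) a0 by simp
qed

lemma VVh_zero_nodes:
  assumes J: "J \<ge> 1" and f: "f \<in> VVh p J" and z: "\<forall>j\<le>J. f (node J j) = 0"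
  shows "f x = 0"
proof -
  have "f x $ i = 0" for i
    using Vh_zero_nodes[OF J, of "\<lambda>x. f x $ i" p] f z unfolding VVh_iff by simp
  then show ?thesis by (simp add: vec_eq_iff)
qed

definition E1 :: "nat \<times> 2 \<Rightarrow> (nat \<Rightarrow> real^2) \<times> (nat \<Rightarrow> real)" where
  "E1 ji = ((\<lambda>n. if n = fst ji then axis (snd ji) 1 else 0), 0)"
definition E2 :: "nat \<Rightarrow> (nat \<Rightarrow> real^2) \<times> (nat \<Rightarrow> real)" where
  "E2 j = (0, (\<lambda>n. if n = j then 1 else 0))"
definition S0 :: "nat \<Rightarrow> ((nat \<Rightarrow> real^2) \<times> (nat \<Rightarrow> real)) set" where
  "S0 J = E1 ` ({..J} \<times> UNIV) \<union> E2 ` {..J}"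

lemma S0_span:
  fixes f :: "nat \<Rightarrow> real^2" and g :: "nat \<Rightarrow> real"
  assumes f: "\<forall>n>J. f n = 0" and g: "\<forall>n>J. g n = 0"
  shows "(f, g) \<in> span (S0 J)"
proof -
  define s1 where "s1 = (\<Sum>ji\<in>{..J} \<times> UNIV. (f (fst ji) $ snd ji) *\<^sub>R E1 ji)"
  define s2 where "s2 = (\<Sum>j\<in>{..J}. g j *\<^sub>R E2 j)"
  have m1: "s1 \<in> span (S0 J)" unfolding s1_def
    by (intro span_sum span_scale span_base) (auto simp: S0_def)
  have m2: "s2 \<in> span (S0 J)" unfolding s2_def
    by (intro span_sum span_scale span_base) (auto simp: S0_def)
  have f1: "fst s1 n = f n" for n
  proof -
    have "fst s1 n = (\<Sum>ji\<in>{..J} \<times> UNIV. (f (fst ji) $ snd ji) *\<^sub>R (if n = fst ji then axis (snd ji) 1 else 0))"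
      unfolding s1_def fst_sum by (simp add: sum_fun_apply E1_def)
    also have "\<dots> = (\<Sum>j\<in>{..J}. \<Sum>i\<in>UNIV. (f j $ i) *\<^sub>R (if n = j then axis i (1::real) else 0))"
      by (simp add: sum.cartesian_product case_prod_beta)
    also have "\<dots> = (\<Sum>j\<in>{..J}. if n = j then (\<Sum>i\<in>UNIV. (f j $ i) *\<^sub>R axis i (1::real)) else 0)"
      by (rule sum.cong) auto
    also have "\<dots> = (if n \<in> {..J} then (\<Sum>i\<in>UNIV. (f n $ i) *\<^sub>R axis i (1::real)) else 0)"
      by (simp add: sum.delta[of "{..J}" n "\<lambda>j. \<Sum>i\<in>UNIV. (f j $ i) *\<^sub>R axis i (1::real)", symmetric] eq_commute)
    also have "\<dots> = f n" using f basis_expansion[of "f n"] by (auto simp: scalar_mult_eq_scaleR)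
    finally show ?thesis .
  qed
  have f2: "fst s2 n = 0" for n unfolding s2_def fst_sum by (simp add: E2_def sum_fun_apply)
  have g1: "snd s1 n = 0" for n unfolding s1_def snd_sum by (simp add: E1_def sum_fun_apply)
  have g2: "snd s2 n = g n" for n
  proof -
    have "snd s2 n = (\<Sum>j\<in>{..J}. g j * (if n = j then 1 else 0))"
      unfolding s2_def snd_sum by (simp add: sum_fun_apply E2_def)
    also have "\<dots> = (if n \<in> {..J} then g n else 0)"
      by (simp add: if_distrib sum.delta eq_commute cong: if_cong)
    also have "\<dots> = g n" using g by auto
    finally show ?thesis .
  qed
  have "(f, g) = s1 + s2" using f1 f2 g1 g2 by (simp add: prod_eq_iff fun_eq_iff)
  then show ?thesis using span_add[OF m1 m2] by simp
qed



lemma PC_nth: "PC J (f :: real \<Rightarrow> real^2) \<Longrightarrow> PC J (\<lambda>x. f x $ i)"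
  unfolding PC_def
proof
  fix j assume "\<forall>j\<in>{1..J}. \<exists>g. continuous_on (cls J j) g \<and> (\<forall>x\<in>opn J j. f x = g x)" "j \<in> {1..J}"
  then obtain g where "continuous_on (cls J j) g" "\<forall>x\<in>opn J j. f x = g x" by blast
  then show "\<exists>g. continuous_on (cls J j) g \<and> (\<forall>x\<in>opn J j. f x $ i = g x)"
    by (intro exI[of _ "\<lambda>x. g x $ i"]) (simp add: continuous_on_component)
qed

definition mid :: "nat \<Rightarrow> nat \<Rightarrow> real" where "mid J j = (node J (j-1) + node J j) / 2"

lemma mid_opn: "J \<ge> 1 \<Longrightarrow> j \<in> {1..J} \<Longrightarrow> mid J j \<in> opn J j"
  unfolding mid_def by (rule opn_ne)

lemma rho_mid:
  assumes J: "J \<ge> 1" and f: "f \<in> VVh p J" and j: "j \<in> {1..J}" and x: "x \<in> opn J j"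
  shows "Xrho f x = Xrho f (mid J j)"
proof -
  obtain A B where AB: "\<forall>y\<in>cls J j. f y = y *\<^sub>R A + B" using VVh_aff[OF f j] by blast
  show ?thesis using Xrho_aff[OF j x AB] Xrho_aff[OF j mid_opn[OF J j] AB] by simp
qed

lemma inner2: "(c::real^2) \<bullet> v = c$1 * v$1 + c$2 * v$2"
  by (simp add: inner_vec_def sum_2)

lemma IS_pos:
  assumes J: "J \<ge> 1"
    and G: "\<forall>j\<in>{1..J}. continuous_on (cls J j) (G j) \<and> (\<forall>x\<in>opn J j. h x = G j x) \<and> (\<forall>x\<in>cls J j. G j x \<ge> 0)"
    and h0: "\<forall>x\<in>{0..1}. h x \<ge> (0::real)"
  shows "IS l J h \<ge> 0 \<and> (IS l J h = 0 \<longrightarrow> (\<forall>j\<in>{1..J}.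
           (l \<longrightarrow> G j (node J j) = 0 \<and> G j (node J (j-1)) = 0) \<and> (\<not> l \<longrightarrow> (\<forall>x\<in>cls J j. G j x = 0))))"
proof -
  have pc: "PC J h" unfolding PC_def using G by blast
  have endp: "node J j \<in> cls J j" "node J (j-1) \<in> cls J j" if "j \<in> {1..J}" for j
    using node_lt[OF J that] by (auto simp: cls_def)
  show ?thesis
  proof (cases l)
    case True
    have LL: "Lim (at_left (node J j)) h = G j (node J j)" if j: "j \<in> {1..J}" for j
    proof -
      have g1: "continuous_on (cls J j) (G j)" and g2: "\<forall>x\<in>opn J j. h x = G j x" using G j by auto
      show ?thesis by (rule tendsto_Lim[OF _ lim_left[OF J j g1 g2]]) simp
    qed
    have LR: "Lim (at_right (node J (j-1))) h = G j (node J (j-1))" if j: "j \<in> {1..J}" for j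
    proof -
      have g1: "continuous_on (cls J j) (G j)" and g2: "\<forall>x\<in>opn J j. h x = G j x" using G j by auto
      show ?thesis by (rule tendsto_Lim[OF _ lim_right[OF J j g1 g2]]) simp
    qed
    have eq: "IS l J h = (1 / real J) / 2 * (\<Sum>j\<in>{1..J}. G j (node J j) + G j (node J (j-1)))"
    proof -
      have "(\<Sum>j\<in>{1..J}. Lim (at_left (node J j)) h + Lim (at_right (node J (j - 1))) h)
          = (\<Sum>j\<in>{1..J}. G j (node J j) + G j (node J (j-1)))"
      proof (rule sum.cong[OF refl])
        fix j assume j: "j \<in> {1..J}"
        show "Lim (at_left (node J j)) h + Lim (at_right (node J (j - 1))) h = G j (node J j) + G j (node J (j-1))"
          using LL[OF j] LR[OF j] by simp
      qed
      then show ?thesis unfolding IS_def Lump_def using True by simp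
    qed
    have nn1: "0 \<le> G j (node J j)" "0 \<le> G j (node J (j-1))" if j: "j \<in> {1..J}" for j
    proof -
      have "\<forall>x\<in>cls J j. G j x \<ge> 0" using G j by blast
      then show "0 \<le> G j (node J j)" "0 \<le> G j (node J (j-1))" using endp[OF j] by auto
    qed
    have nn: "\<forall>j\<in>{1..J}. 0 \<le> G j (node J j) + G j (node J (j-1))"
      using nn1 by (simp add: add_nonneg_nonneg)
    have s0: "0 \<le> (\<Sum>j\<in>{1..J}. G j (node J j) + G j (node J (j-1)))" using nn by (intro sum_nonneg) blast
    have K: "(1 / real J) / 2 > 0" using J by simp
    have z: "\<forall>j\<in>{1..J}. G j (node J j) = 0 \<and> G j (node J (j-1)) = 0" if "IS l J h = 0"
    proof -
      have "(1 / real J) / 2 * (\<Sum>j\<in>{1..J}. G j (node J j) + G j (node J (j-1))) = 0"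
        using that eq by simp
      then have "(\<Sum>j\<in>{1..J}. G j (node J j) + G j (node J (j-1))) = 0" using K by simp
      moreover have "(\<Sum>j\<in>{1..J}. G j (node J j) + G j (node J (j-1))) = 0
          \<longleftrightarrow> (\<forall>j\<in>{1..J}. G j (node J j) + G j (node J (j-1)) = 0)"
        by (rule sum_nonneg_eq_0_iff) (use nn in auto)
      ultimately have S: "\<forall>j\<in>{1..J}. G j (node J j) + G j (node J (j-1)) = 0" by blast
      show ?thesis
      proof
        fix j assume j: "j \<in> {1..J}"
        have "G j (node J j) + G j (node J (j-1)) = 0" using S j by blast
        then show "G j (node J j) = 0 \<and> G j (node J (j-1)) = 0" using nn1[OF j] by linarith
      qed
    qed
    have pos: "IS l J h \<ge> 0" unfolding eq using s0 K by simp
    show ?thesis using pos z True by blast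
  next
    case False
    have int: "h integrable_on {0..1}" using PC_integrable[OF J pc] .
    have I0: "IS l J h = integral {0..1} h" using False by (simp add: IS_def)
    have nn: "0 \<le> integral {0..1} h" using int h0 by (intro integral_nonneg) auto
    have z: "\<forall>x\<in>cls J j. G j x = 0" if j: "j \<in> {1..J}" and z0: "integral {0..1} h = 0" for j
    proof -
      have lt: "node J (j-1) < node J j" using node_lt[OF J j] .
      have Gc: "continuous_on {node J (j-1)..node J j} (G j)" using G j by (simp add: cls_def)
      have Gi: "G j integrable_on {node J (j-1)..node J j}" using Gc integrable_continuous_interval by blast
      have fin: "finite {node J (j-1), node J j}" by simp
      have hi: "h integrable_on {node J (j-1)..node J j}"
        by (rule integrable_spike_finite[OF fin _ Gi]) (use G j in \<open>auto simp: opn_def\<close>)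
      have sub: "{node J (j-1)..node J j} \<subseteq> {0..1}" using cls_sub[OF J j] by (simp add: cls_def)
      have "integral {node J (j-1)..node J j} h \<le> integral {0..1} h"
        by (rule integral_subset_le[OF sub hi int]) (use h0 in auto)
      moreover have "0 \<le> integral {node J (j-1)..node J j} h"
        by (rule integral_nonneg[OF hi]) (use h0 sub in auto)
      ultimately have ih: "integral {node J (j-1)..node J j} h = 0" using z0 by simp
      have "integral {node J (j-1)..node J j} (G j) = integral {node J (j-1)..node J j} h"
        by (rule integral_spike[of "{node J (j-1), node J j}"]) (use G j in \<open>auto simp: opn_def\<close>)
      then have ig: "integral (cbox (node J (j-1)) (node J j)) (G j) = 0" using ih by simp
      have "\<forall>x\<in>cbox (node J (j-1)) (node J j). G j x = 0"
        using integral_cbox_eq_0_iff[of "node J (j-1)" "node J j" "G j"] Gc ig lt G j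
        by (auto simp: cls_def)
      then show ?thesis by (simp add: cls_def)
    qed
    show ?thesis using I0 nn z False by auto
  qed
qed

lemma nonneg3: "(a::real) \<ge> 0 \<Longrightarrow> n \<ge> 0 \<Longrightarrow> a * b * (b * n) \<ge> 0"
proof -
  assume a: "a \<ge> 0" and n: "n \<ge> 0"
  have "a * b * (b * n) = a * (b * b) * n" by (simp add: algebra_simps)
  moreover have "a * (b * b) * n \<ge> 0" using a n by (simp add: mult_nonneg_nonneg)
  ultimately show ?thesis by simp
qed

lemma nonneg4: "(a::real) \<ge> 0 \<Longrightarrow> n \<ge> 0 \<Longrightarrow> a * (1 / n) * ((v::real^2) \<bullet> v) \<ge> 0"
  by (simp add: mult_nonneg_nonneg)

lemma inj_lemma:
  fixes d :: "real \<Rightarrow> real^2" and k :: "real \<Rightarrow> real"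
  assumes J: "J \<ge> 1" and d0s: "d0 \<subseteq> {0,1}"
    and X0: "X \<in> VVh0 p J d0" and A: "assmA d0 X" and C: "assmC l p J d0 X" and dt: "dt > 0"
    and d: "d \<in> VVhD p J dD d0 d1 d2" and k: "k \<in> W_sharp l p J d0"
    and H: "\<forall>eta\<in>VVhD p J dD d0 d1 d2. \<forall>c\<in>W_sharp l p J d0.
              fA1 l J X dt d c - fM l J X k c + fA2 l J X k eta + fS J X d eta = 0"
  shows "d = (\<lambda>x. 0) \<and> k = (\<lambda>x. 0)"
proof -
  have X: "X \<in> VVh p J" using X0 by (simp add: VVh0_def)
  have dV: "d \<in> VVh p J" using VVhD_VVh[OF d] .
  have kV: "k \<in> Vh p J" using W_Vh[OF k] .
  have X1nn: "X x \<bullet> e1 \<ge> 0" if x: "x \<in> {0..1}" for x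
  proof (cases "x \<in> d0")
    case True then show ?thesis using X0 by (simp add: VVh0_def)
  next
    case False
    then have "x \<in> {0..1} - d0" using x by blast
    then show ?thesis using A unfolding assmA_def by (meson less_imp_le)
  qed
  have X1pos: "X x \<bullet> e1 > 0" if j: "j \<in> {1..J}" and x: "x \<in> opn J j" for x j
  proof -
    have "x \<in> {0<..<1}" using opn_sub[OF J j] x by blast
    then have "x \<in> {0..1} - d0" using d0s by auto
    then show ?thesis using A unfolding assmA_def by blast
  qed
  define Aj where "Aj j = Xrho X (mid J j)" for j
  define Dj where "Dj j = Xrho d (mid J j)" for j
  have rX: "Xrho X x = Aj j" if j: "j \<in> {1..J}" and x: "x \<in> opn J j" for j x
    using rho_mid[OF J X j x] unfolding Aj_def .
  have rd: "Xrho d x = Dj j" if j: "j \<in> {1..J}" and x: "x \<in> opn J j" for j x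
    using rho_mid[OF J dV j x] unfolding Dj_def .
  have Apos: "norm (Aj j) > 0" if j: "j \<in> {1..J}" for j
    unfolding Aj_def using assmA_pos[OF J X A j mid_opn[OF J j]] .
  have Xc: "continuous_on {0..1} (\<lambda>x. X x \<bullet> e1)"
    by (intro continuous_on_inner VVh_cont[OF X] continuous_on_const)
  have kc: "continuous_on {0..1} k" using Vh_cont[OF kV] .

  \<comment> \<open>energy identity\<close>
  have kW: "(\<lambda>x. (-dt) * k x) \<in> W_sharp l p J d0" using W_scale[OF k] .
  have H1: "fA1 l J X dt d (\<lambda>x. (-dt) * k x) - fM l J X k (\<lambda>x. (-dt) * k x) + fA2 l J X k d + fS J X d d = 0"
    using H d kW by blast
  have e1: "fA1 l J X dt d (\<lambda>x. (-dt) * k x) = (-1) * fA2 l J X k d"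
    unfolding fA1_def fA2_def
    by (rule IS_sc'[OF J], (intro pcI pc_X1[OF J X] pc_vec[OF J X] pc_nX[OF X] pc_nu[OF X] pc_vec[OF J dV] pc_sc[OF J kV])+,
        use dt in \<open>simp add: inner_commute field_simps\<close>)
  have e2: "fM l J X k (\<lambda>x. (-dt) * k x) = (-dt) * fM l J X k k" using fM_sc_c[OF J X kV kV] .
  have en: "dt * fM l J X k k + fS J X d d = 0" using H1 unfolding e1 e2 by simp

  define GM where "GM j x = (X x \<bullet> e1) * k x * (k x * norm (Aj j))" for j x
  have PM: "IS l J (\<lambda>x. (X x \<bullet> e1) * k x * (k x * norm (Xrho X x))) \<ge> 0 \<and>
      (IS l J (\<lambda>x. (X x \<bullet> e1) * k x * (k x * norm (Xrho X x))) = 0 \<longrightarrow> (\<forall>j\<in>{1..J}.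
           (l \<longrightarrow> GM j (node J j) = 0 \<and> GM j (node J (j-1)) = 0) \<and> (\<not> l \<longrightarrow> (\<forall>x\<in>cls J j. GM j x = 0))))"
  proof (rule IS_pos[OF J])
    show "\<forall>j\<in>{1..J}. continuous_on (cls J j) (GM j) \<and> (\<forall>x\<in>opn J j. (X x \<bullet> e1) * k x * (k x * norm (Xrho X x)) = GM j x)
        \<and> (\<forall>x\<in>cls J j. GM j x \<ge> 0)"
    proof
      fix j assume j: "j \<in> {1..J}"
      have "continuous_on {0..1} (GM j)" unfolding GM_def
        by (intro continuous_on_mult Xc kc continuous_on_const)
      then have "continuous_on (cls J j) (GM j)" using continuous_on_subset cls_sub[OF J j] by blast
      moreover have "\<forall>x\<in>opn J j. (X x \<bullet> e1) * k x * (k x * norm (Xrho X x)) = GM j x"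
        using rX[OF j] unfolding GM_def by simp
      moreover have "\<forall>x\<in>cls J j. GM j x \<ge> 0"
        using X1nn cls_sub[OF J j] unfolding GM_def by (auto intro!: nonneg3)
      ultimately show "continuous_on (cls J j) (GM j) \<and> (\<forall>x\<in>opn J j. (X x \<bullet> e1) * k x * (k x * norm (Xrho X x)) = GM j x)
        \<and> (\<forall>x\<in>cls J j. GM j x \<ge> 0)" by blast
    qed
    show "\<forall>x\<in>{0..1}. (X x \<bullet> e1) * k x * (k x * norm (Xrho X x)) \<ge> 0"
      using X1nn by (auto intro!: nonneg3)
  qed
  define GS where "GS j x = (X x \<bullet> e1) * (1 / norm (Aj j)) * (Dj j \<bullet> Dj j)" for j x
  have PS: "IS False J (\<lambda>x. (X x \<bullet> e1) * (1 / norm (Xrho X x)) * (Xrho d x \<bullet> Xrho d x)) \<ge> 0 \<and>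
      (IS False J (\<lambda>x. (X x \<bullet> e1) * (1 / norm (Xrho X x)) * (Xrho d x \<bullet> Xrho d x)) = 0 \<longrightarrow> (\<forall>j\<in>{1..J}.
           (False \<longrightarrow> GS j (node J j) = 0 \<and> GS j (node J (j-1)) = 0) \<and> (\<not> False \<longrightarrow> (\<forall>x\<in>cls J j. GS j x = 0))))"
  proof (rule IS_pos[OF J])
    show "\<forall>j\<in>{1..J}. continuous_on (cls J j) (GS j) \<and> (\<forall>x\<in>opn J j. (X x \<bullet> e1) * (1 / norm (Xrho X x)) * (Xrho d x \<bullet> Xrho d x) = GS j x)
        \<and> (\<forall>x\<in>cls J j. GS j x \<ge> 0)"
    proof
      fix j assume j: "j \<in> {1..J}"
      have "continuous_on {0..1} (GS j)" unfolding GS_def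
        by (intro continuous_on_mult Xc continuous_on_const)
      then have "continuous_on (cls J j) (GS j)" using continuous_on_subset cls_sub[OF J j] by blast
      moreover have "\<forall>x\<in>opn J j. (X x \<bullet> e1) * (1 / norm (Xrho X x)) * (Xrho d x \<bullet> Xrho d x) = GS j x"
        using rX[OF j] rd[OF j] unfolding GS_def by simp
      moreover have "\<forall>x\<in>cls J j. GS j x \<ge> 0"
        using X1nn cls_sub[OF J j] unfolding GS_def by (auto intro!: nonneg4)
      ultimately show "continuous_on (cls J j) (GS j) \<and> (\<forall>x\<in>opn J j. (X x \<bullet> e1) * (1 / norm (Xrho X x)) * (Xrho d x \<bullet> Xrho d x) = GS j x)
        \<and> (\<forall>x\<in>cls J j. GS j x \<ge> 0)" by blast
    qed
    show "\<forall>x\<in>{0..1}. (X x \<bullet> e1) * (1 / norm (Xrho X x)) * (Xrho d x \<bullet> Xrho d x) \<ge> 0"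
      using X1nn by (auto intro!: nonneg4)
  qed
  have M0: "fM l J X k k = 0" and S0': "fS J X d d = 0"
  proof -
    have m: "fM l J X k k \<ge> 0" using PM unfolding fM_def by blast
    have s: "fS J X d d \<ge> 0" using PS unfolding fS_def by blast
    have "dt * fM l J X k k \<ge> 0" using m dt by simp
    then show "fM l J X k k = 0" "fS J X d d = 0" using en m s dt by (auto simp: add_nonneg_eq_0_iff)
  qed
  have GS0: "\<forall>j\<in>{1..J}. \<forall>x\<in>cls J j. GS j x = 0" using PS S0' unfolding fS_def by simp
  have GMz: "\<forall>j\<in>{1..J}. (l \<longrightarrow> GM j (node J j) = 0 \<and> GM j (node J (j-1)) = 0) \<and> (\<not> l \<longrightarrow> (\<forall>x\<in>cls J j. GM j x = 0))"
    using PM M0 unfolding fM_def by simp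

  have Dz: "Dj j = 0" if j: "j \<in> {1..J}" for j
  proof -
    have m: "mid J j \<in> cls J j" using mid_opn[OF J j] opn_sub_cls by blast
    have "GS j (mid J j) = 0" using GS0 j m by blast
    moreover have "X (mid J j) \<bullet> e1 > 0" using X1pos[OF j mid_opn[OF J j]] .
    moreover have "1 / norm (Aj j) > 0" using Apos[OF j] by simp
    ultimately have "Dj j \<bullet> Dj j = 0" unfolding GS_def by simp
    then show ?thesis by simp
  qed
  have dstep: "d x = d (node J (j-1))" if j: "j \<in> {1..J}" and x: "x \<in> cls J j" for j x
  proof -
    obtain D B where DB: "\<forall>y\<in>cls J j. d y = y *\<^sub>R D + B" using VVh_aff[OF dV j] by blast
    have "D = Dj j" using Xrho_aff[OF j mid_opn[OF J j] DB] unfolding Dj_def by simp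
    then have D0: "D = 0" using Dz[OF j] by simp
    have n: "node J (j-1) \<in> cls J j" using node_lt[OF J j] by (simp add: cls_def)
    show ?thesis using DB x n D0 by simp
  qed
  have dn: "d (node J m) = d 0" if "m \<le> J" for m
    using that
  proof (induction m)
    case 0 then show ?case by simp
  next
    case (Suc m)
    have j: "Suc m \<in> {1..J}" using Suc by simp
    have "node J (Suc m) \<in> cls J (Suc m)" using node_lt[OF J j] by (simp add: cls_def)
    then have "d (node J (Suc m)) = d (node J m)" using dstep[OF j] by simp
    then show ?case using Suc by simp
  qed
  have dall: "d x = d 0" if x: "x \<in> {0..1}" for x
  proof -
    obtain j where j: "j \<in> {1..J}" "x \<in> cls J j" using cover_cls[OF J x] by blast
    have "j - 1 \<le> J" using j(1) by auto
    then have "d (node J (j-1)) = d 0" by (rule dn)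
    then show ?thesis using dstep[OF j] by simp
  qed

  have kend: "k (node J j) = 0 \<and> k (node J (j-1)) = 0" if j: "j \<in> {1..J}" for j
  proof (cases l)
    case True
    have kq: "k q = 0" if q: "q \<in> {0..1}" and g: "GM j q = 0" for q
    proof (rule ccontr)
      assume kq: "k q \<noteq> 0"
      have "(X q \<bullet> e1) * (k q * k q * norm (Aj j)) = 0" using g unfolding GM_def by (simp add: algebra_simps)
      then have "X q \<bullet> e1 = 0" using kq Apos[OF j] by simp
      then have "q \<in> d0" using A q unfolding assmA_def by force
      then have "k q = 0" using k True unfolding W_sharp_def Wh0_def by simp
      then show False using kq by simp
    qed
    have g: "GM j (node J j) = 0" "GM j (node J (j-1)) = 0" using GMz j True by auto
    have q: "node J j \<in> {0..1}" "node J (j-1) \<in> {0..1}"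
      using node_ge0 node_le1[of j J] node_le1[of "j-1" J] j by auto
    show ?thesis using kq[OF q(1) g(1)] kq[OF q(2) g(2)] by simp
  next
    case False
    have g: "\<forall>x\<in>cls J j. GM j x = 0" using GMz j False by auto
    have kz: "k x = 0" if x: "x \<in> opn J j" for x
    proof -
      have "GM j x = 0" using g x opn_sub_cls by blast
      then have "(X x \<bullet> e1) * (k x * k x * norm (Aj j)) = 0" unfolding GM_def by (simp add: algebra_simps)
      then show ?thesis using X1pos[OF j x] Apos[OF j] by simp
    qed
    obtain a b where ab: "\<forall>y\<in>cls J j. k y = a * y + b" using Vh_aff[OF kV j] by blast
    define m1 where "m1 = mid J j"
    define m2 where "m2 = (node J (j-1) + mid J j) / 2"
    have lt: "node J (j-1) < node J j" using node_lt[OF J j] .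
    have m1o: "m1 \<in> opn J j" unfolding m1_def using mid_opn[OF J j] .
    have m2o: "m2 \<in> opn J j" unfolding m2_def using lt by (simp add: opn_def mid_def field_simps)
    have ne: "m1 \<noteq> m2" unfolding m1_def m2_def using lt by (simp add: mid_def)
    have z1: "a * m1 + b = 0" using kz[OF m1o] ab m1o opn_sub_cls by force
    have z2: "a * m2 + b = 0" using kz[OF m2o] ab m2o opn_sub_cls by force
    have "a * (m1 - m2) = (a * m1 + b) - (a * m2 + b)" by (simp add: algebra_simps)
    then have "a * (m1 - m2) = 0" unfolding z1 z2 by simp
    then have a0: "a = 0" using ne by simp
    then have b0: "b = 0" using z1 by simp
    have "node J j \<in> cls J j" "node J (j-1) \<in> cls J j" using lt by (auto simp: cls_def)
    then show ?thesis using ab a0 b0 by simp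
  qed
  have kz: "k x = 0" for x
  proof (rule Vh_zero_nodes[OF J kV])
    show "\<forall>j\<le>J. k (node J j) = 0"
    proof (intro allI impI)
      fix m assume m: "m \<le> J"
      show "k (node J m) = 0"
      proof (cases "m = 0")
        case True then show ?thesis using kend[of 1] J by simp
      next
        case False then show ?thesis using kend[of m] m by simp
      qed
    qed
  qed
  have k0: "k = (\<lambda>x. 0)" using kz by (simp add: fun_eq_iff)

  define c0 where "c0 = d 0"
  define V where "V c i = IS l J (\<lambda>x. ((X x \<bullet> e1) * (nu X x $ i)) * (c x * norm (Xrho X x)))" for c i
  have A10: "fA1 l J X dt d c = 0" if c: "c \<in> W_sharp l p J d0" for c
  proof -
    have "fA1 l J X dt d c - fM l J X k c + fA2 l J X k (\<lambda>x. 0) + fS J X d (\<lambda>x. 0) = 0"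
      using H c VVhD_zero by blast
    then show ?thesis unfolding k0 using fM_zero_k[OF J] fA2_zero[OF J] fS_zero[OF J] by simp
  qed
  have A1V: "fA1 l J X dt d c = (c0$1 / dt) * V c 1 + (c0$2 / dt) * V c 2" if c: "c \<in> W_sharp l p J d0" for c
    unfolding fA1_def V_def
  proof (rule IS_lin[OF J])
    have cV: "c \<in> Vh p J" using W_Vh[OF c] .
    show "PC J (\<lambda>x. X x \<bullet> e1 * nu X x $ 1 * (c x * norm (Xrho X x)))"
      by (intro pcI PC_nth pc_X1[OF J X] pc_vec[OF J X] pc_nX[OF X] pc_nu[OF X] pc_sc[OF J cV])+
    show "PC J (\<lambda>x. X x \<bullet> e1 * nu X x $ 2 * (c x * norm (Xrho X x)))"
      by (intro pcI PC_nth pc_X1[OF J X] pc_vec[OF J X] pc_nX[OF X] pc_nu[OF X] pc_sc[OF J cV])+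
    show "eqv J (\<lambda>x. X x \<bullet> e1 * (1 / dt) * (d x \<bullet> nu X x) * (c x * norm (Xrho X x)))
      (\<lambda>x. c0 $ 1 / dt * (X x \<bullet> e1 * nu X x $ 1 * (c x * norm (Xrho X x))) +
           c0 $ 2 / dt * (X x \<bullet> e1 * nu X x $ 2 * (c x * norm (Xrho X x))))"
      unfolding eqv_def
    proof (intro ballI)
      fix j x assume j: "j \<in> {1..J}" and x: "x \<in> opn J j"
      have "x \<in> {0..1}" using opn_sub[OF J j] x by auto
      then have dx: "d x = c0" using dall unfolding c0_def by blast
      show "X x \<bullet> e1 * (1 / dt) * (d x \<bullet> nu X x) * (c x * norm (Xrho X x)) =
          c0 $ 1 / dt * (X x \<bullet> e1 * nu X x $ 1 * (c x * norm (Xrho X x))) +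
          c0 $ 2 / dt * (X x \<bullet> e1 * nu X x $ 2 * (c x * norm (Xrho X x)))"
        unfolding dx inner2 by (simp add: algebra_simps)
    qed
  qed
  define vv where "vv c = (\<chi> i. ip_sharp l J (\<lambda>x. (X x \<bullet> e1) * (nu X x $ i)) (\<lambda>x. c x * norm (Xrho X x)))" for c
  have vvV: "vv c $ i = V c i" for c i unfolding vv_def V_def ip_sharp_IS by (simp add: inner_real_def)
  have orth: "c0 \<bullet> vv c = 0" if c: "c \<in> W_sharp l p J d0" for c
  proof -
    have "(c0$1 / dt) * V c 1 + (c0$2 / dt) * V c 2 = 0" using A10[OF c] A1V[OF c] by simp
    then have "(c0$1 * V c 1 + c0$2 * V c 2) / dt = 0" by (simp add: add_divide_distrib)
    then have "c0$1 * V c 1 + c0$2 * V c 2 = 0" using dt by simp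
    then show ?thesis unfolding inner2 vvV .
  qed
  have span: "span {vv c | c. c \<in> W_sharp l p J d0} = UNIV"
    using C unfolding assmC_def vv_def .
  have orthz: "c0 \<bullet> z = 0" if "z \<in> span {vv c | c. c \<in> W_sharp l p J d0}" for z
    using that
  proof (induction rule: span_induct_alt)
    case base then show ?case by simp
  next
    case (step a x y)
    then obtain c where "x = vv c" "c \<in> W_sharp l p J d0" by blast
    then have "c0 \<bullet> x = 0" using orth by simp
    then show ?case using step by (simp add: inner_add_right scalar_mult_eq_scaleR)
  qed
  have "c0 \<bullet> c0 = 0" using orthz span by simp
  then have c00: "c0 = 0" by simp
  have "d x = 0" for x
  proof (cases "x \<in> {0..1}")
    case True then show ?thesis using dall c00 unfolding c0_def by simp
  next
    case False then show ?thesis using VVh_out[OF dV] by blast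
  qed
  then show ?thesis using k0 by (simp add: fun_eq_iff)
qed



lemma fin_bound:
  fixes U :: "((real \<Rightarrow> real^2) \<times> (real \<Rightarrow> real)) set"
  assumes J: "J \<ge> 1" and sub: "subspace U"
    and UV: "\<And>u. u \<in> U \<Longrightarrow> fst u \<in> VVh p J \<and> snd u \<in> Vh p J"
    and AU: "A \<subseteq> U" and ind: "independent A" and fin: "finite A"
  shows "card A \<le> card (S0 J)"
proof -
  define N where "N u = ((\<lambda>n. if n \<le> J then fst u (node J n) else 0),
      (\<lambda>n. if n \<le> J then snd u (node J n) else 0))" for u :: "(real \<Rightarrow> real^2) \<times> (real \<Rightarrow> real)"
  have lin: "linear N" by (rule linearI) (simp_all add: N_def prod_eq_iff fun_eq_iff)
  have spanU: "span A \<subseteq> U" using span_minimal[OF AU sub] .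
  have N0: "u = 0" if u: "u \<in> U" and z: "N u = 0" for u
  proof -
    have z1: "\<forall>j\<le>J. fst u (node J j) = 0"
    proof (intro allI impI)
      fix j assume "j \<le> J"
      moreover have "fst (N u) j = 0" using z by simp
      ultimately show "fst u (node J j) = 0" by (simp add: N_def)
    qed
    have z2: "\<forall>j\<le>J. snd u (node J j) = 0"
    proof (intro allI impI)
      fix j assume "j \<le> J"
      moreover have "snd (N u) j = 0" using z by simp
      ultimately show "snd u (node J j) = 0" by (simp add: N_def)
    qed
    have "fst u x = 0" for x using VVh_zero_nodes[OF J _ z1] UV[OF u] by blast
    moreover have "snd u x = 0" for x using Vh_zero_nodes[OF J _ z2] UV[OF u] by blast
    ultimately show "u = 0" by (simp add: prod_eq_iff fun_eq_iff)
  qed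
  have inj: "inj_on N (span A)"
  proof (rule inj_onI)
    fix x y assume x: "x \<in> span A" and y: "y \<in> span A" and e: "N x = N y"
    have "N (x - y) = 0" using linear_diff[OF lin] e by simp
    moreover have "x - y \<in> U" using spanU x y subspace_diff[OF sub] by blast
    ultimately have "x - y = 0" using N0 by blast
    then show "x = y" by simp
  qed
  have indN: "independent (N ` A)" by (rule linear_independent_injective_image[OF lin ind inj])
  have injA: "inj_on N A" using inj_on_subset[OF inj span_superset] .
  have NS: "N ` A \<subseteq> span (S0 J)"
  proof
    fix y assume "y \<in> N ` A"
    then obtain u where u: "y = N u" by blast
    have "N u \<in> span (S0 J)" unfolding N_def by (rule S0_span) auto
    then show "y \<in> span (S0 J)" using u by simp
  qed
  have finS: "finite (S0 J)" unfolding S0_def by simp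
  have "card (N ` A) \<le> card (S0 J)" using independent_span_bound[OF finS indN NS] by simp
  then show ?thesis using card_image[OF injA] by simp
qed
lemma ex1_transfer:
  "(\<exists>!u. u \<in> U \<and> R u) \<Longrightarrow> (\<And>p. p \<in> U \<Longrightarrow> Q p \<longleftrightarrow> R p) \<Longrightarrow> \<exists>!p. p \<in> U \<and> Q p"
  by blast

theorem lemma4p3:
  fixes periodic lumped :: bool and J :: nat
    and dD d0 d1 d2 :: "real set" and rh :: "real \<Rightarrow> real"
    and X :: "real \<Rightarrow> real^2" and dt :: real
  assumes J: "J \<ge> 3"
    and part: "dD \<union> d0 \<union> d1 \<union> d2 = bdry periodic"
    and disj: "dD \<inter> d0 = {}" "dD \<inter> d1 = {}" "dD \<inter> d2 = {}"
              "d0 \<inter> d1 = {}" "d0 \<inter> d2 = {}" "d1 \<inter> d2 = {}"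
    and rh: "\<forall>p\<in>bdry periodic. \<bar>rh p\<bar> \<le> 1"
    and X: "X \<in> VVh0 periodic J d0"
    and A: "assmA d0 X"
    and C: "assmC lumped periodic J d0 X"
    and dt: "dt > 0"
  shows "\<exists>!p \<in> VVhD periodic J dD d0 d1 d2 \<times> W_sharp lumped periodic J d0.
     (\<forall>c \<in> W_sharp lumped periodic J d0.
        ip_sharp lumped J (\<lambda>x. (X x \<bullet> e1) *\<^sub>R ((1 / dt) *\<^sub>R ((X x + fst p x) - X x)))
                          (\<lambda>x. (c x * norm (Xrho X x)) *\<^sub>R nu X x)
      = ip_sharp lumped J (\<lambda>x. (X x \<bullet> e1) * snd p x) (\<lambda>x. c x * norm (Xrho X x)))
   \<and> (\<forall>eta \<in> VVhD periodic J dD d0 d1 d2.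
        ip_sharp lumped J (\<lambda>x. ((X x \<bullet> e1) * snd p x) *\<^sub>R nu X x)
                          (\<lambda>x. norm (Xrho X x) *\<^sub>R eta x)
      + ip (\<lambda>x. eta x \<bullet> e1) (\<lambda>x. norm (Xrho X x))
      + ip (\<lambda>x. (X x \<bullet> e1) *\<^sub>R Xrho (\<lambda>y. X y + fst p y) x)
           (\<lambda>x. (1 / norm (Xrho X x)) *\<^sub>R Xrho eta x)
      = - ((\<Sum>q\<in>d1. rh q * (X q \<bullet> e1) * (eta q \<bullet> e2))
         + (\<Sum>q\<in>d2. rh q * (X q \<bullet> e1) * (eta q \<bullet> e1))))"
proof -
  have J1: "J \<ge> 1" using J by simp
  have d0s: "d0 \<subseteq> {0,1}" using part by (auto simp: bdry_def split: if_splits)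
  have XV: "X \<in> VVh periodic J" using X by (simp add: VVh0_def)
  define VD where "VD = VVhD periodic J dD d0 d1 d2"
  define W where "W = W_sharp lumped periodic J d0"
  define U where "U = VD \<times> W"
  define a where "a u v = fA1 lumped J X dt (fst u) (snd v) - fM lumped J X (snd u) (snd v)
      + fA2 lumped J X (snd u) (fst v) + fS J X (fst u) (fst v)"
    for u v :: "(real \<Rightarrow> real^2) \<times> (real \<Rightarrow> real)"
  define F where "F v = fG J X rh d1 d2 (fst v)" for v :: "(real \<Rightarrow> real^2) \<times> (real \<Rightarrow> real)"
  have VDV: "f \<in> VVh periodic J" if "f \<in> VD" for f using that VVhD_VVh unfolding VD_def by blast
  have WV: "c \<in> Vh periodic J" if "c \<in> W" for c using that W_Vh unfolding W_def by blast
  have Uiff: "u \<in> U \<longleftrightarrow> fst u \<in> VD \<and> snd u \<in> W" for u unfolding U_def by (simp add: mem_Times_iff)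
  have fadd: "fst (u + u') = (\<lambda>x. fst u x + fst u' x)" "snd (u + u') = (\<lambda>x. snd u x + snd u' x)"
    for u u' :: "(real \<Rightarrow> real^2) \<times> (real \<Rightarrow> real)" by (simp_all add: fun_eq_iff)
  have fsc: "fst (c *\<^sub>R u) = (\<lambda>x. c *\<^sub>R fst u x)" "snd (c *\<^sub>R u) = (\<lambda>x. c * snd u x)"
    for c and u :: "(real \<Rightarrow> real^2) \<times> (real \<Rightarrow> real)" by (simp_all add: fun_eq_iff)
  have sub: "subspace U"
    unfolding subspace_def
  proof (intro conjI ballI allI)
    show "0 \<in> U" unfolding Uiff using VVhD_zero W_zero by (simp add: zero_fun_def VD_def W_def)
    fix x y assume x: "x \<in> U" and y: "y \<in> U"
    show "x + y \<in> U" using x y unfolding Uiff fadd VD_def W_def by (simp add: VVhD_add W_add)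
  next
    fix c and x :: "(real \<Rightarrow> real^2) \<times> (real \<Rightarrow> real)" assume x: "x \<in> U"
    show "c *\<^sub>R x \<in> U" using x unfolding Uiff fsc VD_def W_def by (simp add: VVhD_scale W_scale)
  qed
  have a_add1: "a (u+u') v = a u v + a u' v" if "u\<in>U" "u'\<in>U" "v\<in>U" for u u' v
  proof -
    have m: "fst u \<in> VVh periodic J" "fst u' \<in> VVh periodic J" "snd u \<in> Vh periodic J" "snd u' \<in> Vh periodic J"
        "fst v \<in> VVh periodic J" "snd v \<in> Vh periodic J" using that VDV WV unfolding Uiff by auto
    show ?thesis unfolding a_def fadd
      fA1_add_d[OF J1 XV m(1,2,6)] fM_add_k[OF J1 XV m(3,4,6)] fA2_add_k[OF J1 XV m(3,4,5)] fS_add_d[OF J1 XV m(1,2,5)]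
      by simp
  qed
  have a_sc1: "a (c *\<^sub>R u) v = c * a u v" if "u\<in>U" "v\<in>U" for c u v
  proof -
    have m: "fst u \<in> VVh periodic J" "snd u \<in> Vh periodic J"
        "fst v \<in> VVh periodic J" "snd v \<in> Vh periodic J" using that VDV WV unfolding Uiff by auto
    show ?thesis unfolding a_def fsc
      fA1_sc_d[OF J1 XV m(1,4)] fM_sc_k[OF J1 XV m(2,4)] fA2_sc_k[OF J1 XV m(2,3)] fS_sc_d[OF J1 XV m(1,3)]
      by (simp add: algebra_simps)
  qed
  have a_add2: "a u (v+v') = a u v + a u v'" if "u\<in>U" "v\<in>U" "v'\<in>U" for u v v'
  proof -
    have m: "fst u \<in> VVh periodic J" "snd u \<in> Vh periodic J" "fst v \<in> VVh periodic J" "snd v \<in> Vh periodic J"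
        "fst v' \<in> VVh periodic J" "snd v' \<in> Vh periodic J" using that VDV WV unfolding Uiff by auto
    show ?thesis unfolding a_def fadd
      fA1_add_c[OF J1 XV m(1,4,6)] fM_add_c[OF J1 XV m(2,4,6)] fA2_add_e[OF J1 XV m(2,3,5)] fS_add_e[OF J1 XV m(1,3,5)]
      by simp
  qed
  have a_sc2: "a u (c *\<^sub>R v) = c * a u v" if "u\<in>U" "v\<in>U" for c u v
  proof -
    have m: "fst u \<in> VVh periodic J" "snd u \<in> Vh periodic J"
        "fst v \<in> VVh periodic J" "snd v \<in> Vh periodic J" using that VDV WV unfolding Uiff by auto
    show ?thesis unfolding a_def fsc
      fA1_sc_c[OF J1 XV m(1,4)] fM_sc_c[OF J1 XV m(2,4)] fA2_sc_e[OF J1 XV m(2,3)] fS_sc_e[OF J1 XV m(1,3)]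
      by (simp add: algebra_simps)
  qed
  have F_add: "F (v+v') = F v + F v'" if "v\<in>U" "v'\<in>U" for v v'
  proof -
    have m: "fst v \<in> VVh periodic J" "fst v' \<in> VVh periodic J" using that VDV unfolding Uiff by auto
    show ?thesis unfolding F_def fadd fG_add[OF J1 XV m] ..
  qed
  have F_sc: "F (c *\<^sub>R v) = c * F v" if "v\<in>U" for c v
  proof -
    have m: "fst v \<in> VVh periodic J" using that VDV unfolding Uiff by auto
    show ?thesis unfolding F_def fsc fG_sc[OF J1 XV m] ..
  qed
  have inj: "u = 0" if u: "u \<in> U" and z: "\<forall>v\<in>U. a u v = 0" for u
  proof -
    have H: "\<forall>eta\<in>VVhD periodic J dD d0 d1 d2. \<forall>c\<in>W_sharp lumped periodic J d0.
        fA1 lumped J X dt (fst u) c - fM lumped J X (snd u) c + fA2 lumped J X (snd u) eta + fS J X (fst u) eta = 0"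
    proof (intro ballI)
      fix eta c assume e: "eta \<in> VVhD periodic J dD d0 d1 d2" and c: "c \<in> W_sharp lumped periodic J d0"
      have "(eta, c) \<in> U" using e c unfolding Uiff VD_def W_def by simp
      then show "fA1 lumped J X dt (fst u) c - fM lumped J X (snd u) c + fA2 lumped J X (snd u) eta + fS J X (fst u) eta = 0"
        using z unfolding a_def by fastforce
    qed
    have m: "fst u \<in> VVhD periodic J dD d0 d1 d2" "snd u \<in> W_sharp lumped periodic J d0"
      using u unfolding Uiff VD_def W_def by auto
    have "fst u = (\<lambda>x. 0) \<and> snd u = (\<lambda>x. 0)" by (rule inj_lemma[OF J1 d0s X A C dt m H])
    then show "u = 0" by (simp add: prod_eq_iff zero_fun_def)
  qed
  have bnd: "card B \<le> card (S0 J)" if "B \<subseteq> U" "independent B" "finite B" for B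
    by (rule fin_bound[OF J1 sub _ that]) (use VDV WV in \<open>auto simp: Uiff\<close>)
  have ex: "\<exists>!u. u \<in> U \<and> (\<forall>v\<in>U. a u v = F v)"
    by (rule abstract_solve[OF sub bnd a_add1 a_sc1 a_add2 a_sc2 F_add F_sc inj])
  have E: "((\<forall>c \<in> W_sharp lumped periodic J d0.
        ip_sharp lumped J (\<lambda>x. (X x \<bullet> e1) *\<^sub>R ((1 / dt) *\<^sub>R ((X x + fst p x) - X x)))
                          (\<lambda>x. (c x * norm (Xrho X x)) *\<^sub>R nu X x)
      = ip_sharp lumped J (\<lambda>x. (X x \<bullet> e1) * snd p x) (\<lambda>x. c x * norm (Xrho X x)))
   \<and> (\<forall>eta \<in> VVhD periodic J dD d0 d1 d2.
        ip_sharp lumped J (\<lambda>x. ((X x \<bullet> e1) * snd p x) *\<^sub>R nu X x)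
                          (\<lambda>x. norm (Xrho X x) *\<^sub>R eta x)
      + ip (\<lambda>x. eta x \<bullet> e1) (\<lambda>x. norm (Xrho X x))
      + ip (\<lambda>x. (X x \<bullet> e1) *\<^sub>R Xrho (\<lambda>y. X y + fst p y) x)
           (\<lambda>x. (1 / norm (Xrho X x)) *\<^sub>R Xrho eta x)
      = - ((\<Sum>q\<in>d1. rh q * (X q \<bullet> e1) * (eta q \<bullet> e2))
         + (\<Sum>q\<in>d2. rh q * (X q \<bullet> e1) * (eta q \<bullet> e1)))))
     \<longleftrightarrow> (\<forall>v\<in>U. a p v = F v)" (is "?lhs \<longleftrightarrow> ?rhs") if p: "p \<in> U" for p
  proof -
    have dV: "fst p \<in> VVh periodic J" and kV: "snd p \<in> Vh periodic J" using p VDV WV unfolding Uiff by auto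
    have t1: "ip_sharp lumped J (\<lambda>x. (X x \<bullet> e1) *\<^sub>R ((1 / dt) *\<^sub>R ((X x + fst p x) - X x)))
                          (\<lambda>x. (c x * norm (Xrho X x)) *\<^sub>R nu X x) = fA1 lumped J X dt (fst p) c" for c
      unfolding ip_sharp_IS fA1_def by (rule arg_cong[where f="IS lumped J"]) (simp add: fun_eq_iff algebra_simps)
    have t2: "ip_sharp lumped J (\<lambda>x. (X x \<bullet> e1) * snd p x) (\<lambda>x. c x * norm (Xrho X x)) = fM lumped J X (snd p) c" for c
      unfolding ip_sharp_IS fM_def by (rule arg_cong[where f="IS lumped J"]) (simp add: fun_eq_iff inner_real_def)
    have t3: "ip_sharp lumped J (\<lambda>x. ((X x \<bullet> e1) * snd p x) *\<^sub>R nu X x) (\<lambda>x. norm (Xrho X x) *\<^sub>R eta x)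
        = fA2 lumped J X (snd p) eta" for eta
      unfolding ip_sharp_IS fA2_def by (rule arg_cong[where f="IS lumped J"]) (simp add: fun_eq_iff algebra_simps)
    have t4: "ip (\<lambda>x. eta x \<bullet> e1) (\<lambda>x. norm (Xrho X x)) = IS False J (\<lambda>x. (eta x \<bullet> e1) * norm (Xrho X x))" for eta
      by (simp add: ip_def IS_def inner_real_def)
    have t5: "ip (\<lambda>x. (X x \<bullet> e1) *\<^sub>R Xrho (\<lambda>y. X y + fst p y) x) (\<lambda>x. (1 / norm (Xrho X x)) *\<^sub>R Xrho eta x)
        = IS False J (\<lambda>x. (X x \<bullet> e1) * (1 / norm (Xrho X x)) * (Xrho X x \<bullet> Xrho eta x)) + fS J X (fst p) eta"
      if e: "eta \<in> VVh periodic J" for eta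
    proof -
      have "ip (\<lambda>x. (X x \<bullet> e1) *\<^sub>R Xrho (\<lambda>y. X y + fst p y) x) (\<lambda>x. (1 / norm (Xrho X x)) *\<^sub>R Xrho eta x)
          = IS False J (\<lambda>x. (X x \<bullet> e1) * (1 / norm (Xrho X x)) * (Xrho (\<lambda>y. X y + fst p y) x \<bullet> Xrho eta x))"
        by (simp add: ip_def IS_def)
      also have "\<dots> = IS False J (\<lambda>x. (X x \<bullet> e1) * (1 / norm (Xrho X x)) * (Xrho X x \<bullet> Xrho eta x))
          + IS False J (\<lambda>x. (X x \<bullet> e1) * (1 / norm (Xrho X x)) * (Xrho (fst p) x \<bullet> Xrho eta x))"
        by (rule IS_add_eqv[OF J1], (intro pcI pc_X1[OF J1 XV] pc_vec[OF J1 XV] pc_inv[OF XV] pc_rho[OF XV] pc_rho[OF dV] pc_rho[OF e])+,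
            use Xrho_add[OF XV dV] in \<open>simp add: eqv_def inner_add_left distrib_left add_divide_distrib\<close>)
      finally show ?thesis unfolding fS_def .
    qed
    have eq2: "(ip_sharp lumped J (\<lambda>x. ((X x \<bullet> e1) * snd p x) *\<^sub>R nu X x)
                          (\<lambda>x. norm (Xrho X x) *\<^sub>R eta x)
      + ip (\<lambda>x. eta x \<bullet> e1) (\<lambda>x. norm (Xrho X x))
      + ip (\<lambda>x. (X x \<bullet> e1) *\<^sub>R Xrho (\<lambda>y. X y + fst p y) x)
           (\<lambda>x. (1 / norm (Xrho X x)) *\<^sub>R Xrho eta x)
      = - ((\<Sum>q\<in>d1. rh q * (X q \<bullet> e1) * (eta q \<bullet> e2))
         + (\<Sum>q\<in>d2. rh q * (X q \<bullet> e1) * (eta q \<bullet> e1))))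
      \<longleftrightarrow> fA2 lumped J X (snd p) eta + fS J X (fst p) eta = fG J X rh d1 d2 eta"
      if e: "eta \<in> VVh periodic J" for eta
      unfolding t3 t4 t5[OF e] fG_def by linarith
    have Z: "fA1 lumped J X dt (fst p) (\<lambda>x. 0) = 0" "fM lumped J X (snd p) (\<lambda>x. 0) = 0"
      "fA2 lumped J X (snd p) (\<lambda>x. 0) = 0" "fS J X (fst p) (\<lambda>x. 0) = 0" "fG J X rh d1 d2 (\<lambda>x. 0) = 0"
      using fA1_zero[OF J1] fM_zero[OF J1] fA2_zero[OF J1] fS_zero[OF J1] fG_zero[OF J1] by auto
    show ?thesis
    proof
      assume L: "?lhs"
      show "\<forall>v\<in>U. a p v = F v"
      proof
        fix v assume v: "v \<in> U"
        have c: "snd v \<in> W_sharp lumped periodic J d0" and e: "fst v \<in> VVhD periodic J dD d0 d1 d2"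
          using v unfolding Uiff VD_def W_def by auto
        have 1: "fA1 lumped J X dt (fst p) (snd v) = fM lumped J X (snd p) (snd v)"
          using L c unfolding t1 t2 by blast
        have 2: "fA2 lumped J X (snd p) (fst v) + fS J X (fst p) (fst v) = fG J X rh d1 d2 (fst v)"
          using L e eq2[OF VVhD_VVh[OF e]] by blast
        show "a p v = F v" unfolding a_def F_def using 1 2 by simp
      qed
    next
      assume R: "\<forall>v\<in>U. a p v = F v"
      have 1: "fA1 lumped J X dt (fst p) c = fM lumped J X (snd p) c" if c: "c \<in> W_sharp lumped periodic J d0" for c
      proof -
        have "((\<lambda>x. 0), c) \<in> U" using c VVhD_zero unfolding Uiff VD_def W_def by simp
        then have "a p ((\<lambda>x. 0), c) = F ((\<lambda>x. 0), c)" using R by blast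
        then show ?thesis unfolding a_def F_def using Z by simp
      qed
      have 2: "fA2 lumped J X (snd p) eta + fS J X (fst p) eta = fG J X rh d1 d2 eta"
        if e: "eta \<in> VVhD periodic J dD d0 d1 d2" for eta
      proof -
        have "(eta, (\<lambda>x. 0)) \<in> U" using e W_zero unfolding Uiff VD_def W_def by simp
        then have "a p (eta, (\<lambda>x. 0)) = F (eta, (\<lambda>x. 0))" using R by blast
        then show ?thesis unfolding a_def F_def using Z by simp
      qed
      show "?lhs" using 1 2 eq2 VVhD_VVh unfolding t1 t2 by blast
    qed
  qed
  have U': "VVhD periodic J dD d0 d1 d2 \<times> W_sharp lumped periodic J d0 = U" by (simp add: U_def VD_def W_def)
  show ?thesis unfolding U' by (rule ex1_transfer[OF ex E])
qed


end
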